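(* Let $M$, $x$, $T$, $B$, the encoding $\langle\cdot\rangle$ and the coin set $\mathcal{C}$ be as in the context. Let $1\le j\le T$, and let $C$ be the configuration of $M$ on input $x$ at time step $j$, that is, after $j-1$ steps of computation, with the convention that a halting configuration stays put. Run the greedy change-making process with coin set $\mathcal{C}$, starting from the remaining amount $W_C:=\langle C\rangle\cdot B^{(T-j)T}$. Then the next $T-1$ or $T-2$ coins selected reduce the remaining amount exactly to $W_{\Delta(C)}:=\langle\Delta(C)\rangle\cdot B^{(T-j-1)T}$. Here $\Delta(C)$ is the successor configuration of $C$ under $\delta$, with $\Delta(C)=C$ if $C$ is halting, and $B^{(-1)T}$ is read as $0$.
   Context: Turing machine. $M=\langle Q,\Gamma,\Sigma,\delta,q_0,q_{\mathrm{accept}},q_{\mathrm{reject}}\rangle$ is a deterministic single-tape Turing machine: - $\perp\in\Gamma$ is the blank symbol and $\Sigma\subseteq\Gamma\setminus\{\perp\}$. - $F=\{q_{\mathrm{accept}},q_{\mathrm{reject}}\}$ is the set of halting states. - $\delta:(Q\setminus F)\times\Gamma\to Q\times\Gamma\times\{L,R\}$ is the transition function. Assumptions on $M$: - The first tape cell always holds a left endmarker $\$\in\Gamma$. Whenever the head reads $\$$ in a state $q\notin F$, we have $\delta(q,\$)=(q',\$,R)$ for some $q'$. - Before entering a halting state, the head moves to the endmarker, then overwrites cells 2 and 3 with $\perp$, and halts over cell 2 in the halting state. - On input $x$ of length $n$, $M$ halts within $T=C_M n^{\ell}$ steps, where $T\ge n+3$. Hence only tape cells $1,\dots,T$ are used,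 and the head never reaches cell $T$. A configuration consists of a state $q$, a head position $h$ with $1\le h\le T$, and tape contents $a_1\cdots a_T\in\Gamma^T$. The configuration at time step 1 has state $q_0$, head position 1, and tape $\$\,x_1\cdots x_n\perp^{T-n-1}$. Numerical encoding: - Fix bijections $f:Q\to\{1,\dots,s\}$ and $g:\Gamma\to\{1,\dots,k\}$, where $s=|Q|$ and $k=|\Gamma|$. - Encode a pair $(q,a)$ by $p(q,a):=f(q)k+g(a)$. - Fix an integer base $B\ge(s+1)k+2$. - A digit string $d_1\cdots d_T$ in base $B$ denotes $\sum_{i=1}^T d_iB^{T-i}$. - For a configuration $C$ with state $q$, head position $h$ and tape $a_1\cdots a_T$, set $\langle C\rangle$ to be the digit string with $d_h=p(q,a_h)$ and $d_i=g(a_i)$ for $i\ne h$. Coin set $\mathcal{C}$ (with $B^{(-1)T}:=0$) consists of exactly the following three kinds of coins. (i) Copy coins. For $1\le i,j\le T$ and $a\in\Gamma$: $$c_{\mathrm{copy}}(a,i,j)=g(a)B^{T-i}\big(B^{(T-j)T}-B^{(T-j-1)T}\big).$$ (ii) Transition coins. For $2\le i\le T-1$, $1\le j\le T$, $q\in Q$, and $a^-,a,a^+\in\Gamma$: $$c_{\mathrm{transition}}(q,a^-,a,a^+,i,j)=u\,B^{(T-j)T}-v\,B^{(T-j-1)T},$$ where $u=g(a^-)B^{T-i+1}+p(q,a)B^{T-i}+g(a^+)B^{T-i-1}$ and $v$ is defined by cases: - if $q\notin F$ and $\delta(q,a)=(q',a',L)$: $v=p(q',a^-)B^{T-i+1}+g(a')B^{T-i}+g(a^+)B^{T-i-1}$;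 - if $q\notin F$ and $\delta(q,a)=(q',a',R)$: $v=g(a^-)B^{T-i+1}+g(a')B^{T-i}+p(q',a^+)B^{T-i-1}$; - if $q\in F$: $v=u$. (iii) Left-end transition coins. For $q\in Q\setminus F$, $a^+\in\Gamma$, and $1\le j\le T$, with $\delta(q,\$)=(q',\$,R)$: $$c^{\text{left-end}}_{\mathrm{transition}}(q,a^+,j)=\big(p(q,\$)B^{T-1}+g(a^+)B^{T-2}\big)B^{(T-j)T}-\big(g(\$)B^{T-1}+p(q',a^+)B^{T-2}\big)B^{(T-j-1)T}.$$ Greedy change-making process: from a remaining amount $W'$, repeatedly select the largest coin in $\mathcal{C}$ that is at most $W'$, and subtract it from $W'$. *)

theory Defs
  imports Main
begin

datatype dir = L | R

text \<open>A configuration: (state, head position, tape). Tape cells are indexed 1,2,...;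
  only cells 1..T matter.\<close>
type_synonym ('q,'a) config = "'q \<times> nat \<times> (nat \<Rightarrow> 'a)"

definition tm_step :: "('q \<Rightarrow> 'a \<Rightarrow> 'q \<times> 'a \<times> dir) \<Rightarrow> 'q set \<Rightarrow> ('q,'a) config \<Rightarrow> ('q,'a) config" where
  "tm_step \<delta> F c = (case c of (q, h, tp) \<Rightarrow>
     if q \<in> F then c
     else (case \<delta> q (tp h) of (q', a', d) \<Rightarrow>
             (q', if d = L then h - 1 else h + 1, tp(h := a'))))"

definition init_config :: "'q \<Rightarrow> 'a \<Rightarrow> 'a \<Rightarrow> 'a list \<Rightarrow> ('q,'a) config" where
  "init_config q0 endm blank x =
     (q0, 1, (\<lambda>i. if i = 1 then endm
                  else if 2 \<le> i \<and> i \<le> length x + 1 then x ! (i - 2) else blank))"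

definition config_at :: "('q \<Rightarrow> 'a \<Rightarrow> 'q \<times> 'a \<times> dir) \<Rightarrow> 'q set \<Rightarrow> 'q \<Rightarrow> 'a \<Rightarrow> 'a \<Rightarrow> 'a list
     \<Rightarrow> nat \<Rightarrow> ('q,'a) config" where
  "config_at \<delta> F q0 endm blank x j = (tm_step \<delta> F ^^ (j - 1)) (init_config q0 endm blank x)"

definition pcode :: "('q \<Rightarrow> nat) \<Rightarrow> ('a \<Rightarrow> nat) \<Rightarrow> nat \<Rightarrow> 'q \<Rightarrow> 'a \<Rightarrow> int" where
  "pcode f g k q a = int (f q) * int k + int (g a)"

definition enc :: "('q \<Rightarrow> nat) \<Rightarrow> ('a \<Rightarrow> nat) \<Rightarrow> nat \<Rightarrow> int \<Rightarrow> nat \<Rightarrow> ('q,'a) config \<Rightarrow> int" where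
  "enc f g k B T c = (case c of (q, h, tp) \<Rightarrow>
     (\<Sum>i = 1..T. (if i = h then pcode f g k q (tp i) else int (g (tp i))) * B ^ (T - i)))"

text \<open>B^(e T) for an integer e, with B^((-1)T) := 0 (and generally 0 for e < 0).\<close>
definition bpow :: "int \<Rightarrow> nat \<Rightarrow> int \<Rightarrow> int" where
  "bpow B T e = (if e < 0 then 0 else B ^ (nat e * T))"

definition copy_coins :: "('a \<Rightarrow> nat) \<Rightarrow> int \<Rightarrow> nat \<Rightarrow> int set" where
  "copy_coins g B T =
     {int (g a) * B ^ (T - i) * (bpow B T (int T - int j) - bpow B T (int T - int j - 1))
      | a i j. 1 \<le> i \<and> i \<le> T \<and> 1 \<le> j \<and> j \<le> T}"

definition trans_u :: "('q \<Rightarrow> nat) \<Rightarrow> ('a \<Rightarrow> nat) \<Rightarrow> nat \<Rightarrow> int \<Rightarrow> nat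
     \<Rightarrow> 'q \<Rightarrow> 'a \<Rightarrow> 'a \<Rightarrow> 'a \<Rightarrow> nat \<Rightarrow> int" where
  "trans_u f g k B T q am a ap i =
     int (g am) * B ^ (T - i + 1) + pcode f g k q a * B ^ (T - i) + int (g ap) * B ^ (T - i - 1)"

definition trans_v :: "('q \<Rightarrow> 'a \<Rightarrow> 'q \<times> 'a \<times> dir) \<Rightarrow> 'q set \<Rightarrow> ('q \<Rightarrow> nat) \<Rightarrow> ('a \<Rightarrow> nat)
     \<Rightarrow> nat \<Rightarrow> int \<Rightarrow> nat \<Rightarrow> 'q \<Rightarrow> 'a \<Rightarrow> 'a \<Rightarrow> 'a \<Rightarrow> nat \<Rightarrow> int" where
  "trans_v \<delta> F f g k B T q am a ap i =
     (if q \<in> F then trans_u f g k B T q am a ap i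
      else (case \<delta> q a of (q', a', d) \<Rightarrow>
        (if d = L then
           pcode f g k q' am * B ^ (T - i + 1) + int (g a') * B ^ (T - i) + int (g ap) * B ^ (T - i - 1)
         else
           int (g am) * B ^ (T - i + 1) + int (g a') * B ^ (T - i) + pcode f g k q' ap * B ^ (T - i - 1))))"

definition transition_coins :: "('q \<Rightarrow> 'a \<Rightarrow> 'q \<times> 'a \<times> dir) \<Rightarrow> 'q set \<Rightarrow> ('q \<Rightarrow> nat) \<Rightarrow> ('a \<Rightarrow> nat)
     \<Rightarrow> nat \<Rightarrow> int \<Rightarrow> nat \<Rightarrow> int set" where
  "transition_coins \<delta> F f g k B T =
     {trans_u f g k B T q am a ap i * bpow B T (int T - int j)
        - trans_v \<delta> F f g k B T q am a ap i * bpow B T (int T - int j - 1)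
      | q am a ap i j. 2 \<le> i \<and> i \<le> T - 1 \<and> 1 \<le> j \<and> j \<le> T}"

definition leftend_coins :: "('q \<Rightarrow> 'a \<Rightarrow> 'q \<times> 'a \<times> dir) \<Rightarrow> 'q set \<Rightarrow> ('q \<Rightarrow> nat) \<Rightarrow> ('a \<Rightarrow> nat)
     \<Rightarrow> nat \<Rightarrow> int \<Rightarrow> nat \<Rightarrow> 'a \<Rightarrow> int set" where
  "leftend_coins \<delta> F f g k B T endm =
     {(pcode f g k q endm * B ^ (T - 1) + int (g ap) * B ^ (T - 2)) * bpow B T (int T - int j)
        - (int (g endm) * B ^ (T - 1) + pcode f g k (fst (\<delta> q endm)) ap * B ^ (T - 2))
            * bpow B T (int T - int j - 1)
      | q ap j. q \<notin> F \<and> 1 \<le> j \<and> j \<le> T}"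

definition coin_set :: "('q \<Rightarrow> 'a \<Rightarrow> 'q \<times> 'a \<times> dir) \<Rightarrow> 'q set \<Rightarrow> ('q \<Rightarrow> nat) \<Rightarrow> ('a \<Rightarrow> nat)
     \<Rightarrow> nat \<Rightarrow> int \<Rightarrow> nat \<Rightarrow> 'a \<Rightarrow> int set" where
  "coin_set \<delta> F f g k B T endm =
     copy_coins g B T \<union> transition_coins \<delta> F f g k B T \<union> leftend_coins \<delta> F f g k B T endm"

definition greedy_step :: "int set \<Rightarrow> int \<Rightarrow> int" where
  "greedy_step Cs W = W - Max {c \<in> Cs. c \<le> W}"

end

theory Submission
  imports Defs
begin


lemma bpow_top: "1 \<le> j \<Longrightarrow> j \<le> T \<Longrightarrow> bpow B T (int T - int j) = B^((T-j)*T)"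
  unfolding bpow_def by (simp add: nat_diff_distrib)

lemma bpow_bot_lt: "j < T \<Longrightarrow> bpow B T (int T - int j - 1) = B^((T-j-1)*T)"
  unfolding bpow_def by (simp add: nat_diff_distrib)

lemma bpow_bot_eq: "j = T \<Longrightarrow> bpow B T (int T - int j - 1) = 0"
  unfolding bpow_def by simp

lemma bpow_rel: "1 \<le> j \<Longrightarrow> j < T \<Longrightarrow> bpow B T (int T - int j) = B^T * bpow B T (int T - int j - 1)"
proof -
  assume a: "1 \<le> j" "j < T"
  have "(T-j)*T = T + (T-j-1)*T" using a
    by (metis Suc_diff_Suc add.commute diff_Suc_1 mult_Suc)
  thus ?thesis using a by (simp add: bpow_top bpow_bot_lt power_add)
qed

definition shape :: "int \<Rightarrow> nat \<Rightarrow> int \<Rightarrow> int \<Rightarrow> bool" where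
  "shape B T X Y \<longleftrightarrow> 1 \<le> X \<and> X < B^T \<and> 0 \<le> Y \<and> Y < B^T \<and> B^T - 1 \<le> X*B^T - Y"

lemma level_cmp:
  fixes B U Lo X Y X0 Y0 :: int
  assumes B: "B \<ge> 2" and j: "1 \<le> j" "j \<le> T" and j': "1 \<le> j'" "j' \<le> T"
  and sh: "shape B T X Y" and sh0: "shape B T X0 Y0"
  and U: "0 \<le> U" "U + 2 \<le> B^T" and Lo: "0 \<le> Lo" "Lo < B^T"
  and cmp: "j' = j \<Longrightarrow> X < X0 \<or> (X = X0 \<and> Y = Y0) \<or> U + 2 \<le> X \<or> (U + 1 \<le> X \<and> Y + Lo < B^T)"
  and le: "X * bpow B T (int T - int j') - Y * bpow B T (int T - int j' - 1)
     \<le> U * bpow B T (int T - int j) + Lo * bpow B T (int T - int j - 1)"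
  shows "X * bpow B T (int T - int j') - Y * bpow B T (int T - int j' - 1)
     \<le> X0 * bpow B T (int T - int j) - Y0 * bpow B T (int T - int j - 1)"
proof -
  define P where "P = bpow B T (int T - int j)"
  define P' where "P' = bpow B T (int T - int j - 1)"
  define Q where "Q = bpow B T (int T - int j')"
  define Q' where "Q' = bpow B T (int T - int j' - 1)"
  have BT: "B^T \<ge> 1" using B by simp
  have Ppos: "P > 0" unfolding P_def using j B by (simp add: bpow_top)
  have P'nn: "P' \<ge> 0" unfolding P'_def bpow_def using B by simp
  have Q'nn: "Q' \<ge> 0" unfolding Q'_def bpow_def using B by simp
  have kf: "\<And>Z. 0 \<le> Z \<Longrightarrow> Z < B^T \<Longrightarrow> Z * P' < P"
  proof -
    fix Z :: int assume z: "0 \<le> Z" "Z < B^T"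
    show "Z * P' < P"
    proof (cases "j < T")
      case True
      have "P = B^T * P'" unfolding P_def P'_def using True j by (simp add: bpow_rel)
      moreover have "P' > 0" unfolding P'_def using True B by (simp add: bpow_bot_lt)
      ultimately show ?thesis using z by (simp add: mult.commute)
    next
      case False
      hence "P' = 0" unfolding P'_def bpow_def using j by simp
      thus ?thesis using Ppos by simp
    qed
  qed
  have sX: "1 \<le> X" "X < B^T" "0 \<le> Y" "Y < B^T" "B^T - 1 \<le> X*B^T - Y"
    using sh unfolding shape_def by auto
  have sX0: "1 \<le> X0" "X0 < B^T" "0 \<le> Y0" "Y0 < B^T" "B^T - 1 \<le> X0*B^T - Y0"
    using sh0 unfolding shape_def by auto
  have W: "U * P + Lo * P' < (U + 1) * P" using kf[OF Lo] by (simp add: algebra_simps)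
  have le': "X * Q - Y * Q' \<le> U * P + Lo * P'" using le unfolding P_def P'_def Q_def Q'_def .
  consider "j' < j" | "j < j'" | "j' = j" by linarith
  hence "X * Q - Y * Q' \<le> X0 * P - Y0 * P'"
  proof cases
    case 1
    have Qr: "Q = B^T * Q'" unfolding Q_def Q'_def using 1 j j' by (simp add: bpow_rel)
    have "Q' = B^((T-j'-1)*T)" unfolding Q'_def using 1 j by (simp add: bpow_bot_lt)
    moreover have "P = B^((T-j)*T)" unfolding P_def using j by (simp add: bpow_top)
    moreover have "(T-j)*T \<le> (T-j'-1)*T" using 1 by (intro mult_right_mono) auto
    ultimately have QP: "P \<le> Q'" using B by (simp add: power_increasing)
    have "X * Q - Y * Q' = (X*B^T - Y) * Q'" using Qr by (simp add: algebra_simps)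
    also have "\<dots> \<ge> (B^T - 1) * Q'" using sX(5) Q'nn by (intro mult_right_mono)
    finally have c1: "X * Q - Y * Q' \<ge> (B^T - 1) * Q'" .
    have "(B^T - 1) * Q' \<ge> (B^T - 1) * P" using QP BT by (intro mult_left_mono) auto
    moreover have "(U + 1) * P \<le> (B^T - 1) * P" using U Ppos by (intro mult_right_mono) auto
    ultimately show ?thesis using c1 W le' by linarith
  next
    case 2
    have jT: "j < T" using 2 j' by linarith
    have Pr: "P = B^T * P'" unfolding P_def P'_def using jT j by (simp add: bpow_rel)
    have "Q = B^((T-j')*T)" unfolding Q_def using j' by (simp add: bpow_top)
    moreover have "P' = B^((T-j-1)*T)" unfolding P'_def using jT by (simp add: bpow_bot_lt)
    moreover have "(T-j')*T \<le> (T-j-1)*T" using 2 by (intro mult_right_mono) auto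
    ultimately have QP: "Q \<le> P'" using B by (simp add: power_increasing)
    have "X * Q - Y * Q' \<le> X * Q" using sX Q'nn by simp
    also have "\<dots> \<le> X * P'" using QP sX by (intro mult_left_mono) auto
    also have "\<dots> \<le> (B^T - 1) * P'" using sX P'nn by (intro mult_right_mono) auto
    also have "\<dots> \<le> (X0*B^T - Y0) * P'" using sX0 P'nn by (intro mult_right_mono) auto
    also have "\<dots> = X0 * P - Y0 * P'" using Pr by (simp add: algebra_simps)
    finally show ?thesis .
  next
    case 3
    hence QQ: "Q = P" "Q' = P'" unfolding Q_def P_def Q'_def P'_def by auto
    have YP: "0 \<le> Y * P'" using sX P'nn by simp
    have Y0P: "Y0 * P' < P" using kf sX0 by simp
    have YP2: "Y * P' < P" using kf sX by simp
    consider "X < X0" | "X = X0 \<and> Y = Y0" | "U + 2 \<le> X" | "U + 1 \<le> X \<and> Y + Lo < B^T"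
      using cmp 3 by blast
    thus ?thesis
    proof cases
      case 1
      have "X * P \<le> (X0 - 1) * P" using 1 Ppos by (intro mult_right_mono) auto
      thus ?thesis using QQ YP Y0P by (simp add: algebra_simps)
    next
      case 2 thus ?thesis using QQ by simp
    next
      case c: 3
      have "(U + 2) * P \<le> X * P" using c Ppos by (intro mult_right_mono) auto
      hence False using QQ YP2 W le' by (simp add: algebra_simps)
      thus ?thesis ..
    next
      case c: 4
      have "(U + 1) * P \<le> X * P" using c Ppos by (intro mult_right_mono) auto
      moreover have "(Y + Lo) * P' < P" using kf c sX Lo by simp
      ultimately have False using QQ le' by (simp add: algebra_simps)
      thus ?thesis ..
    qed
  qed
  thus ?thesis unfolding P_def P'_def Q_def Q'_def .
qed


lemma two_digit_uniq:
  fixes a1 a2 b1 b2 B :: int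
  assumes "0 \<le> a2" "a2 < B" "0 \<le> b2" "b2 < B" "a1*B + a2 = b1*B + b2"
  shows "a1 = b1 \<and> a2 = b2"
proof -
  have "(a2 + a1*B) mod B = a2" using assms by simp
  moreover have "(b2 + b1*B) mod B = b2" using assms by simp
  moreover have "(a2 + a1*B) mod B = (b2 + b1*B) mod B" using assms(5) by (simp add: add.commute)
  ultimately have e: "a2 = b2" by simp
  hence "a1 * B = b1 * B" using assms(5) by simp
  thus ?thesis using e assms(2) assms(1) by simp
qed

lemma digit_lt:
  fixes x y r M :: int
  assumes "x < y" "0 \<le> r" "r < M"
  shows "x*M + r < y*M"
proof -
  have "(x+1)*M \<le> y*M" using assms by (intro mult_right_mono) auto
  thus ?thesis using assms by (simp add: algebra_simps)
qed

lemma digit_ge: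
  fixes x y r M :: int
  assumes "x \<le> y" "0 \<le> r" "0 \<le> M"
  shows "x*M \<le> y*M + r"
proof -
  have "x*M \<le> y*M" using assms by (intro mult_right_mono) auto
  thus ?thesis using assms by simp
qed

locale cs =
  fixes \<delta> :: "'q \<Rightarrow> 'a \<Rightarrow> 'q \<times> 'a \<times> dir" and F :: "'q set" and f :: "'q \<Rightarrow> nat"
    and g :: "'a \<Rightarrow> nat" and K :: nat and B :: int and T :: nat and endm :: 'a
  assumes g_lo: "1 \<le> g a" and g_hi: "g a \<le> K" and f_lo: "1 \<le> f q"
    and B_hi: "int (f q) * int K + int K + 2 \<le> B"
    and inj_f: "inj f" and inj_g: "inj g"
    and T3: "3 \<le> T"
    and endmarker: "q \<notin> F \<Longrightarrow> \<exists>q'. \<delta> q endm = (q', endm, R)"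
begin

lemma KB: "int K + int K + 2 \<le> B"
proof -
  have "1 * int K \<le> int (f undefined) * int K" using f_lo[of undefined] by (intro mult_right_mono) auto
  thus ?thesis using B_hi[of undefined] by linarith
qed

lemma B4: "4 \<le> B" using KB g_lo[of endm] g_hi[of endm] by linarith

lemma gd: "1 \<le> int (g a)" "int (g a) \<le> int K" "int (g a) \<le> B - 2"
  using g_lo[of a] g_hi[of a] KB by auto

lemma pc: "int K + 1 \<le> pcode f g K q a" "pcode f g K q a \<le> B - 2"
proof -
  show "int K + 1 \<le> pcode f g K q a"
  proof -
    have "1 * int K \<le> int (f q) * int K" using f_lo[of q] by (intro mult_right_mono) auto
    thus ?thesis using gd[of a] unfolding pcode_def by linarith
  qed
  show "pcode f g K q a \<le> B - 2" unfolding pcode_def using gd[of a] B_hi[of q] by linarith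
qed

lemma pc1: "1 \<le> pcode f g K q a" using pc(1)[of q a] by linarith

lemma pc_inj: "pcode f g K q a = pcode f g K q' a' \<Longrightarrow> q = q' \<and> a = a'"
proof -
  assume e: "pcode f g K q a = pcode f g K q' a'"
  hence "int (f q) * int K + (int (g a) - 1) = int (f q') * int K + (int (g a') - 1)"
    unfolding pcode_def by simp
  moreover have "0 \<le> int (g a) - 1" "int (g a) - 1 < int K" using gd[of a] by auto
  moreover have "0 \<le> int (g a') - 1" "int (g a') - 1 < int K" using gd[of a'] by auto
  ultimately have "int (f q) = int (f q') \<and> int (g a) - 1 = int (g a') - 1"
    using two_digit_uniq by blast
  thus ?thesis using inj_f inj_g by (auto dest: injD)
qed

definition dgt :: "('q,'a) config \<Rightarrow> nat \<Rightarrow> int" where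
  "dgt c i = (case c of (q,h,tp) \<Rightarrow> if i = h then pcode f g K q (tp i) else int (g (tp i)))"

lemma dgt_rng: "1 \<le> dgt c i" "dgt c i \<le> B - 2"
  unfolding dgt_def using gd pc pc1 by (auto split: prod.splits)

lemma enc_eq: "enc f g K B T c = (\<Sum>i\<in>{0<..T}. dgt c i * B^(T-i))"
  unfolding enc_def dgt_def atLeastSucAtMost_greaterThanAtMost[symmetric]
  by (auto split: prod.splits intro!: sum.cong)

definition tops :: "(int \<times> int) set" where
  "tops = {(int (g a) * B^(T-i), int (g a) * B^(T-i)) | a i. 1 \<le> i \<and> i \<le> T}
    \<union> {(trans_u f g K B T q am a ap i, trans_v \<delta> F f g K B T q am a ap i) | q am a ap i. 2 \<le> i \<and> i \<le> T-1}
    \<union> {(pcode f g K q endm * B^(T-1) + int (g ap) * B^(T-2),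
        int (g endm) * B^(T-1) + pcode f g K (fst (\<delta> q endm)) ap * B^(T-2)) | q ap. q \<notin> F}"

abbreviation "Cs \<equiv> coin_set \<delta> F f g K B T endm"

end

context cs begin

lemma tops_copy: "1 \<le> i \<Longrightarrow> i \<le> T \<Longrightarrow> (int (g a) * B^(T-i), int (g a) * B^(T-i)) \<in> tops"
  unfolding tops_def by (rule UnI1, rule UnI1, rule CollectI, rule exI[of _ a], rule exI[of _ i]) simp

lemma tops_trans: "2 \<le> i \<Longrightarrow> i \<le> T - 1 \<Longrightarrow>
   (trans_u f g K B T q am a ap i, trans_v \<delta> F f g K B T q am a ap i) \<in> tops"
  unfolding tops_def by (rule UnI1, rule UnI2, rule CollectI, rule exI[of _ q], rule exI[of _ am],
     rule exI[of _ a], rule exI[of _ ap], rule exI[of _ i]) simp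

lemma tops_left: "q \<notin> F \<Longrightarrow> (pcode f g K q endm * B ^ (T - 1) + int (g ap) * B ^ (T - 2),
          int (g endm) * B ^ (T - 1) + pcode f g K (fst (\<delta> q endm)) ap * B ^ (T - 2)) \<in> tops"
  unfolding tops_def by (rule UnI2, rule CollectI, rule exI[of _ q], rule exI[of _ ap]) simp

lemma Cs_elim:
  assumes "c \<in> Cs"
  obtains X Y j' where "(X,Y) \<in> tops" "1 \<le> j'" "j' \<le> T"
    "c = X * bpow B T (int T - int j') - Y * bpow B T (int T - int j' - 1)"
proof -
  from assms consider (a) "c \<in> copy_coins g B T" | (b) "c \<in> transition_coins \<delta> F f g K B T"
    | (c) "c \<in> leftend_coins \<delta> F f g K B T endm" unfolding coin_set_def by blast
  then show thesis
  proof cases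
    case a
    then obtain a i j' where h: "c = int (g a) * B ^ (T - i) * (bpow B T (int T - int j') - bpow B T (int T - int j' - 1))"
      "1 \<le> i" "i \<le> T" "1 \<le> j'" "j' \<le> T" unfolding copy_coins_def mem_Collect_eq by blast
    show thesis
      by (rule that[OF tops_copy[OF h(2,3)] h(4,5)]) (simp add: h(1) right_diff_distrib)
  next
    case b
    then obtain q am a ap i j' where h: "c = trans_u f g K B T q am a ap i * bpow B T (int T - int j')
        - trans_v \<delta> F f g K B T q am a ap i * bpow B T (int T - int j' - 1)"
      "2 \<le> i" "i \<le> T - 1" "1 \<le> j'" "j' \<le> T" unfolding transition_coins_def mem_Collect_eq by blast
    show thesis
      by (rule that[OF tops_trans[OF h(2,3)] h(4,5) h(1)])
  next
    case c
    then obtain q ap j' where h: "c = (pcode f g K q endm * B ^ (T - 1) + int (g ap) * B ^ (T - 2)) * bpow B T (int T - int j')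
        - (int (g endm) * B ^ (T - 1) + pcode f g K (fst (\<delta> q endm)) ap * B ^ (T - 2))
            * bpow B T (int T - int j' - 1)" "q \<notin> F" "1 \<le> j'" "j' \<le> T"
      unfolding leftend_coins_def mem_Collect_eq by blast
    show thesis
      by (rule that[OF tops_left[OF h(2)] h(3,4) h(1)])
  qed
qed

lemma copy_in: "1 \<le> i \<Longrightarrow> i \<le> T \<Longrightarrow> 1 \<le> j \<Longrightarrow> j \<le> T \<Longrightarrow>
  int (g a) * B^(T-i) * bpow B T (int T - int j) - int (g a) * B^(T-i) * bpow B T (int T - int j - 1) \<in> Cs"
  unfolding coin_set_def copy_coins_def
  by (rule UnI1, rule UnI1, rule CollectI, rule exI[of _ a], rule exI[of _ i], rule exI[of _ j])
     (simp add: right_diff_distrib)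

lemma trans_in: "2 \<le> i \<Longrightarrow> i \<le> T - 1 \<Longrightarrow> 1 \<le> j \<Longrightarrow> j \<le> T \<Longrightarrow>
  trans_u f g K B T q am a ap i * bpow B T (int T - int j)
   - trans_v \<delta> F f g K B T q am a ap i * bpow B T (int T - int j - 1) \<in> Cs"
  unfolding coin_set_def transition_coins_def by (rule UnI1, rule UnI2) blast

lemma left_in: "q \<notin> F \<Longrightarrow> 1 \<le> j \<Longrightarrow> j \<le> T \<Longrightarrow>
  (pcode f g K q endm * B ^ (T - 1) + int (g ap) * B ^ (T - 2)) * bpow B T (int T - int j)
        - (int (g endm) * B ^ (T - 1) + pcode f g K (fst (\<delta> q endm)) ap * B ^ (T - 2))
            * bpow B T (int T - int j - 1) \<in> Cs"
  unfolding coin_set_def leftend_coins_def by (rule UnI2) blast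

lemma finite_Cs:
  assumes "finite (UNIV :: 'q set)" "finite (UNIV :: 'a set)"
  shows "finite Cs"
proof -
  have "copy_coins g B T \<subseteq> (\<lambda>(a,i,j). int (g a) * B ^ (T - i) * (bpow B T (int T - int j) - bpow B T (int T - int j - 1)))
      ` (UNIV \<times> {..T} \<times> {..T})" (is "_ \<subseteq> ?h ` ?S")
  proof
    fix c assume "c \<in> copy_coins g B T"
    then obtain a i j where "c = int (g a) * B ^ (T - i) * (bpow B T (int T - int j) - bpow B T (int T - int j - 1))"
      "i \<le> T" "j \<le> T" unfolding copy_coins_def by blast
    thus "c \<in> ?h ` ?S" by (intro image_eqI[where x="(a,i,j)"]) auto
  qed
  then have f1: "finite (copy_coins g B T)" by (rule finite_subset, intro finite_imageI finite_cartesian_product) (simp_all add: assms)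
  have "transition_coins \<delta> F f g K B T \<subseteq> (\<lambda>(q,am,a,ap,i,j). trans_u f g K B T q am a ap i * bpow B T (int T - int j)
        - trans_v \<delta> F f g K B T q am a ap i * bpow B T (int T - int j - 1))
      ` (UNIV \<times> UNIV \<times> UNIV \<times> UNIV \<times> {..T} \<times> {..T})" (is "_ \<subseteq> ?h ` ?S")
  proof
    fix c assume "c \<in> transition_coins \<delta> F f g K B T"
    then obtain q am a ap i j where "c = trans_u f g K B T q am a ap i * bpow B T (int T - int j)
        - trans_v \<delta> F f g K B T q am a ap i * bpow B T (int T - int j - 1)"
      "i \<le> T" "j \<le> T" unfolding transition_coins_def by fastforce
    thus "c \<in> ?h ` ?S" by (intro image_eqI[where x="(q,am,a,ap,i,j)"]) auto
  qed
  then have f2: "finite (transition_coins \<delta> F f g K B T)" by (rule finite_subset, intro finite_imageI finite_cartesian_product) (simp_all add: assms)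
  have "leftend_coins \<delta> F f g K B T endm \<subseteq> (\<lambda>(q,ap,j). (pcode f g K q endm * B ^ (T - 1) + int (g ap) * B ^ (T - 2)) * bpow B T (int T - int j)
        - (int (g endm) * B ^ (T - 1) + pcode f g K (fst (\<delta> q endm)) ap * B ^ (T - 2))
            * bpow B T (int T - int j - 1))
      ` (UNIV \<times> UNIV \<times> {..T})" (is "_ \<subseteq> ?h ` ?S")
  proof
    fix c assume "c \<in> leftend_coins \<delta> F f g K B T endm"
    then obtain q ap j where "c = (pcode f g K q endm * B ^ (T - 1) + int (g ap) * B ^ (T - 2)) * bpow B T (int T - int j)
        - (int (g endm) * B ^ (T - 1) + pcode f g K (fst (\<delta> q endm)) ap * B ^ (T - 2))
            * bpow B T (int T - int j - 1)" "j \<le> T" unfolding leftend_coins_def by blast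
    thus "c \<in> ?h ` ?S" by (intro image_eqI[where x="(q,ap,j)"]) auto
  qed
  then have f3: "finite (leftend_coins \<delta> F f g K B T endm)" by (rule finite_subset, intro finite_imageI finite_cartesian_product) (simp_all add: assms)
  show ?thesis unfolding coin_set_def using f1 f2 f3 by simp
qed

end


lemma three_digit:
  fixes x1 x2 x3 B :: int
  assumes "2 \<le> B" "0 \<le> x2" "x2 \<le> B - 1" "0 \<le> x3" "x3 \<le> B - 1"
  shows "x1 * B^2 + x2 * B \<le> (x1*B + x2)*B + x3" "(x1*B + x2)*B + x3 < (x1 + 1) * B^2"
proof -
  show "x1 * B^2 + x2 * B \<le> (x1*B + x2)*B + x3" using assms by (simp add: algebra_simps power2_eq_square)
  have "x2 * B \<le> (B - 1) * B" using assms by (intro mult_right_mono) auto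
  thus "(x1*B + x2)*B + x3 < (x1 + 1) * B^2" using assms by (simp add: algebra_simps power2_eq_square)
qed

lemma three_digit_uniq:
  fixes x1 x2 x3 y1 y2 y3 B :: int
  assumes "0 \<le> x2" "x2 < B" "0 \<le> x3" "x3 < B" "0 \<le> y2" "y2 < B" "0 \<le> y3" "y3 < B"
    "(x1*B + x2)*B + x3 = (y1*B + y2)*B + y3"
  shows "x1 = y1 \<and> x2 = y2 \<and> x3 = y3"
proof -
  have "x1*B + x2 = y1*B + y2 \<and> x3 = y3" using two_digit_uniq assms by blast
  thus ?thesis using two_digit_uniq assms by blast
qed

lemma pow_shift: "m = n + k \<Longrightarrow> (B::int)^m = B^n * B^k" by (simp add: power_add)

lemma shapeI1: "1 \<le> X \<Longrightarrow> X < B^T \<Longrightarrow> shape B T X X"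
proof -
  assume a: "1 \<le> X" "X < B^T"
  have "0 \<le> (X - 1) * (B^T - 1)" using a by simp
  thus ?thesis using a unfolding shape_def by (simp add: algebra_simps)
qed

lemma shapeI2: "2 \<le> X \<Longrightarrow> X < B^T \<Longrightarrow> 0 \<le> Y \<Longrightarrow> Y < B^T \<Longrightarrow> shape B T X Y"
proof -
  assume a: "2 \<le> X" "X < B^T" "0 \<le> Y" "Y < B^T"
  have "2 * B^T \<le> X * B^T" using a by (intro mult_right_mono) auto
  thus ?thesis using a unfolding shape_def by (intro conjI) linarith+
qed

context cs begin

lemma B2: "2 \<le> B" using B4 by simp

lemma pc0: "0 \<le> pcode f g K q a" using pc1[of q a] by simp

lemma gdB: "0 \<le> int (g a)" "int (g a) \<le> B - 1" using gd[of a] by auto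
lemma pcB: "0 \<le> pcode f g K q a" "pcode f g K q a \<le> B - 1" using pc[of q a] pc0 by auto

lemma u_form: "2 \<le> i \<Longrightarrow> i \<le> T - 1 \<Longrightarrow> trans_u f g K B T q am a ap i
   = ((int (g am) * B + pcode f g K q a) * B + int (g ap)) * B^(T-i-1)"
proof -
  assume i: "2 \<le> i" "i \<le> T - 1"
  have e1: "B^(T - i + 1) = B^(T-i-1) * B^2" and e2: "B^(T - i) = B^(T-i-1) * B^1"
    using i T3 by (intro pow_shift; arith)+
  show ?thesis unfolding trans_u_def e1 e2 by (simp add: algebra_simps power2_eq_square)
qed

lemma v_form: "2 \<le> i \<Longrightarrow> i \<le> T - 1 \<Longrightarrow> \<exists>y1 y2 y3. trans_v \<delta> F f g K B T q am a ap i
   = ((y1 * B + y2) * B + y3) * B^(T-i-1) \<and> 0 \<le> y1 \<and> y1 \<le> B - 2 \<and> 0 \<le> y2 \<and> y2 \<le> B - 2 \<and> 0 \<le> y3 \<and> y3 \<le> B - 2"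
proof -
  assume i: "2 \<le> i" "i \<le> T - 1"
  have e1: "B^(T - i + 1) = B^(T-i-1) * B^2" and e2: "B^(T - i) = B^(T-i-1) * B^1"
    using i T3 by (intro pow_shift; arith)+
  have r: "\<And>y1 y2 y3. y1 * B^(T-i+1) + y2 * B^(T-i) + y3 * B^(T-i-1) = ((y1 * B + y2) * B + y3) * B^(T-i-1)"
    unfolding e1 e2 by (simp add: algebra_simps power2_eq_square)
  show ?thesis
  proof (cases "q \<in> F")
    case True
    thus ?thesis unfolding trans_v_def trans_u_def r
        by (intro exI[where x="int (g am)"] exI[where x="pcode f g K q a"] exI[where x="int (g ap)"])
          (simp add: gd pc pc0)
  next
    case False
    obtain q' a' d where qd: "\<delta> q a = (q', a', d)" by (metis prod.exhaust)
    show ?thesis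
    proof (cases "d = L")
      case True
      have "trans_v \<delta> F f g K B T q am a ap i = pcode f g K q' am * B^(T-i+1) + int (g a') * B^(T-i) + int (g ap) * B^(T-i-1)"
        unfolding trans_v_def using False qd True by simp
      thus ?thesis unfolding r
        by (intro exI[where x="pcode f g K q' am"] exI[where x="int (g a')"] exI[where x="int (g ap)"])
          (simp add: gd pc pc0)
    next
      case d: False
      have "trans_v \<delta> F f g K B T q am a ap i = int (g am) * B^(T-i+1) + int (g a') * B^(T-i) + pcode f g K q' ap * B^(T-i-1)"
        unfolding trans_v_def using False qd d by simp
      thus ?thesis unfolding r
        by (intro exI[where x="int (g am)"] exI[where x="int (g a')"] exI[where x="pcode f g K q' ap"])
          (simp add: gd pc pc0)
    qed
  qed
qed

lemma left_form:
  "pcode f g K q endm * B ^ (T - 1) + int (g ap) * B ^ (T - 2) = (pcode f g K q endm * B + int (g ap)) * B^(T-2)"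
  "int (g endm) * B ^ (T - 1) + pcode f g K q' ap * B ^ (T - 2) = (int (g endm) * B + pcode f g K q' ap) * B^(T-2)"
proof -
  have e: "B^(T - 1) = B^(T-2) * B^1" using T3 by (intro pow_shift) arith
  show "pcode f g K q endm * B ^ (T - 1) + int (g ap) * B ^ (T - 2) = (pcode f g K q endm * B + int (g ap)) * B^(T-2)"
    unfolding e by (simp add: algebra_simps)
  show "int (g endm) * B ^ (T - 1) + pcode f g K q' ap * B ^ (T - 2) = (int (g endm) * B + pcode f g K q' ap) * B^(T-2)"
    unfolding e by (simp add: algebra_simps)
qed

lemma tops_cases:
  assumes "(X,Y) \<in> tops"
  obtains (cp) a i where "1 \<le> i" "i \<le> T" "X = int (g a) * B^(T-i)" "Y = X"
   | (tr) q am a ap i where "2 \<le> i" "i \<le> T-1"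
       "X = ((int (g am)*B + pcode f g K q a)*B + int (g ap))*B^(T-i-1)"
       "Y = trans_v \<delta> F f g K B T q am a ap i"
   | (le) q ap where "q \<notin> F" "X = (pcode f g K q endm * B + int (g ap))*B^(T-2)"
       "Y = (int (g endm)*B + pcode f g K (fst (\<delta> q endm)) ap)*B^(T-2)"
proof -
  from assms consider
    (1) "(X,Y) \<in> {(int (g a) * B^(T-i), int (g a) * B^(T-i)) | a i. 1 \<le> i \<and> i \<le> T}"
  | (2) "(X,Y) \<in> {(trans_u f g K B T q am a ap i, trans_v \<delta> F f g K B T q am a ap i) | q am a ap i. 2 \<le> i \<and> i \<le> T-1}"
  | (3) "(X,Y) \<in> {(pcode f g K q endm * B^(T-1) + int (g ap) * B^(T-2),
        int (g endm) * B^(T-1) + pcode f g K (fst (\<delta> q endm)) ap * B^(T-2)) | q ap. q \<notin> F}"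
    unfolding tops_def by blast
  thus thesis
  proof cases
    case 1
    then obtain a i where "1 \<le> i" "i \<le> T" "X = int (g a) * B^(T-i)" "Y = X" by blast
    thus thesis by (rule cp)
  next
    case 2
    then obtain q am a ap i where h: "2 \<le> i" "i \<le> T-1" "X = trans_u f g K B T q am a ap i"
       "Y = trans_v \<delta> F f g K B T q am a ap i" by blast
    show thesis by (rule tr[OF h(1,2) _ h(4)]) (simp add: h(3) u_form[OF h(1,2)])
  next
    case 3
    then obtain q ap where h: "q \<notin> F" "X = pcode f g K q endm * B^(T-1) + int (g ap) * B^(T-2)"
       "Y = int (g endm) * B^(T-1) + pcode f g K (fst (\<delta> q endm)) ap * B^(T-2)" by blast
    show thesis by (rule le[OF h(1)]) (simp_all only: h left_form)
  qed
qed

lemma num3_bnd: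
  fixes y1 y2 y3 :: int
  assumes "0 \<le> y1" "y1 \<le> B - 1" "0 \<le> y2" "y2 \<le> B - 1" "0 \<le> y3" "y3 \<le> B - 1"
  shows "0 \<le> (y1*B + y2)*B + y3" "(y1*B + y2)*B + y3 < B^3" "1 \<le> y1 \<Longrightarrow> B^2 \<le> (y1*B + y2)*B + y3"
proof -
  show "0 \<le> (y1*B + y2)*B + y3" using assms B2 by simp
  have "(y1*B + y2)*B + y3 < (y1 + 1) * B^2" using three_digit[OF B2] assms by blast
  also have "\<dots> \<le> B * B^2" using assms B2 by (intro mult_right_mono) auto
  finally show "(y1*B + y2)*B + y3 < B^3" by (simp add: power3_eq_cube power2_eq_square)
  assume "1 \<le> y1"
  have "1 * B^2 \<le> y1 * B^2" using \<open>1 \<le> y1\<close> by (intro mult_right_mono) auto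
  moreover have "0 \<le> y2 * B" using assms B2 by simp
  ultimately show "B^2 \<le> (y1*B + y2)*B + y3" using three_digit(1)[OF B2 assms(3-6), of y1] by linarith
qed

lemma num2_bnd:
  fixes y1 y2 :: int
  assumes "0 \<le> y1" "y1 \<le> B - 1" "0 \<le> y2" "y2 \<le> B - 1"
  shows "0 \<le> y1*B + y2" "y1*B + y2 < B^2" "1 \<le> y1 \<Longrightarrow> B \<le> y1*B + y2"
proof -
  show "0 \<le> y1*B + y2" using assms B2 by simp
  have "y1 * B \<le> (B - 1) * B" using assms B2 by (intro mult_right_mono) auto
  thus "y1*B + y2 < B^2" using assms by (simp add: algebra_simps power2_eq_square)
  assume "1 \<le> y1"
  have "1 * B \<le> y1 * B" using \<open>1 \<le> y1\<close> B2 by (intro mult_right_mono) auto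
  thus "B \<le> y1*B + y2" using assms by linarith
qed

lemma scale_lt: "(N::int) < B^m \<Longrightarrow> m + k \<le> T \<Longrightarrow> N * B^k < B^T"
proof -
  assume a: "N < B^m" "m + k \<le> T"
  have "N * B^k < B^m * B^k" using a B2 by simp
  also have "\<dots> = B^(m+k)" by (simp add: power_add)
  also have "\<dots> \<le> B^T" using a B2 by (intro power_increasing) auto
  finally show ?thesis .
qed

lemma scale_ge: "(c::int) \<le> N \<Longrightarrow> 0 \<le> c \<Longrightarrow> c \<le> N * B^k"
proof -
  assume a: "c \<le> N" "0 \<le> c"
  have "N * 1 \<le> N * B^k" using a B2 by (intro mult_left_mono) auto
  thus ?thesis using a by simp
qed

lemma tops_shape: "(X,Y) \<in> tops \<Longrightarrow> shape B T X Y"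
proof (erule tops_cases)
  fix a i assume h: "1 \<le> i" "i \<le> T" "X = int (g a) * B^(T-i)" "Y = X"
  have "int (g a) < B^1" using gd[of a] by simp
  hence "X < B^T" unfolding h(3) by (rule scale_lt) (use h in auto)
  moreover have "1 \<le> X" unfolding h(3) by (rule scale_ge) (use gd in auto)
  ultimately show "shape B T X Y" using h(4) shapeI1 by simp
next
  fix q am a ap i assume h: "2 \<le> i" "i \<le> T-1"
       "X = ((int (g am)*B + pcode f g K q a)*B + int (g ap))*B^(T-i-1)"
       "Y = trans_v \<delta> F f g K B T q am a ap i"
  have n: "0 \<le> (int (g am)*B + pcode f g K q a)*B + int (g ap)"
    "(int (g am)*B + pcode f g K q a)*B + int (g ap) < B^3"
    "B^2 \<le> (int (g am)*B + pcode f g K q a)*B + int (g ap)"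
    using num3_bnd[OF gdB pcB gdB] gd by auto
  have "X < B^T" unfolding h(3) by (rule scale_lt[OF n(2)]) (use h T3 in arith)
  moreover have "2 \<le> X" unfolding h(3)
  proof (rule scale_ge)
    have "2 * 1 \<le> B * B" using B2 by (intro mult_mono) auto
    thus "2 \<le> (int (g am)*B + pcode f g K q a)*B + int (g ap)" using n(3) by (simp add: power2_eq_square)
  qed simp
  moreover obtain y1 y2 y3 where v: "Y = ((y1 * B + y2) * B + y3) * B^(T-i-1)" "0 \<le> y1" "y1 \<le> B - 2"
     "0 \<le> y2" "y2 \<le> B - 2" "0 \<le> y3" "y3 \<le> B - 2" using v_form[OF h(1,2)] h(4) by blast
  moreover have "0 \<le> Y" "Y < B^T"
  proof -
    have m: "0 \<le> (y1 * B + y2) * B + y3" "(y1 * B + y2) * B + y3 < B^3"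
      using num3_bnd[of y1 y2 y3] v by auto
    show "0 \<le> Y" using m B2 v(1) by simp
    show "Y < B^T" unfolding v(1) by (rule scale_lt[OF m(2)]) (use h T3 in arith)
  qed
  ultimately show "shape B T X Y" using shapeI2 by simp
next
  fix q ap assume h: "q \<notin> F" "X = (pcode f g K q endm * B + int (g ap))*B^(T-2)"
       "Y = (int (g endm)*B + pcode f g K (fst (\<delta> q endm)) ap)*B^(T-2)"
  have n: "pcode f g K q endm * B + int (g ap) < B^2" "B \<le> pcode f g K q endm * B + int (g ap)"
    using num2_bnd[OF pcB gdB] pc1 by auto
  have m: "0 \<le> int (g endm)*B + pcode f g K (fst (\<delta> q endm)) ap"
     "int (g endm)*B + pcode f g K (fst (\<delta> q endm)) ap < B^2"
    using num2_bnd[OF gdB pcB] by auto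
  have "X < B^T" unfolding h(2) by (rule scale_lt[OF n(1)]) (use T3 in arith)
  moreover have "2 \<le> X" unfolding h(2) by (rule scale_ge) (use n(2) B2 in auto)
  moreover have "Y < B^T" unfolding h(3) by (rule scale_lt[OF m(2)]) (use T3 in arith)
  moreover have "0 \<le> Y" unfolding h(3) using m(1) B2 by simp
  ultimately show "shape B T X Y" using shapeI2 by simp
qed

lemma tops_in: "(X,Y) \<in> tops \<Longrightarrow> 1 \<le> j \<Longrightarrow> j \<le> T \<Longrightarrow>
   X * bpow B T (int T - int j) - Y * bpow B T (int T - int j - 1) \<in> Cs"
proof -
  assume t: "(X,Y) \<in> tops" and j: "1 \<le> j" "j \<le> T"
  from t consider
    (1) "(X,Y) \<in> {(int (g a) * B^(T-i), int (g a) * B^(T-i)) | a i. 1 \<le> i \<and> i \<le> T}"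
  | (2) "(X,Y) \<in> {(trans_u f g K B T q am a ap i, trans_v \<delta> F f g K B T q am a ap i) | q am a ap i. 2 \<le> i \<and> i \<le> T-1}"
  | (3) "(X,Y) \<in> {(pcode f g K q endm * B^(T-1) + int (g ap) * B^(T-2),
        int (g endm) * B^(T-1) + pcode f g K (fst (\<delta> q endm)) ap * B^(T-2)) | q ap. q \<notin> F}"
    unfolding tops_def by blast
  thus ?thesis
  proof cases
    case 1
    then obtain a i where h: "1 \<le> i" "i \<le> T" "X = int (g a) * B^(T-i)" "Y = X" by blast
    show ?thesis unfolding h(4) unfolding h(3) by (rule copy_in[OF h(1,2) j])
  next
    case 2
    then obtain q am a ap i where h: "2 \<le> i" "i \<le> T-1" "X = trans_u f g K B T q am a ap i"
       "Y = trans_v \<delta> F f g K B T q am a ap i" by blast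
    show ?thesis unfolding h(3,4) by (rule trans_in[OF h(1,2) j])
  next
    case 3
    then obtain q ap where h: "q \<notin> F" "X = pcode f g K q endm * B^(T-1) + int (g ap) * B^(T-2)"
       "Y = int (g endm) * B^(T-1) + pcode f g K (fst (\<delta> q endm)) ap * B^(T-2)" by blast
    show ?thesis unfolding h(2,3) by (rule left_in[OF h(1) j])
  qed
qed

lemma greedy_pick:
  fixes U Lo X0 Y0 :: int
  assumes fin: "finite Cs" and j: "1 \<le> j" "j \<le> T" and t0: "(X0,Y0) \<in> tops"
    and U: "0 \<le> U" "U + 2 \<le> B^T" and Lo: "0 \<le> Lo" "Lo < B^T" and XU: "X0 \<le> U"
    and cmp: "\<And>X Y. (X,Y) \<in> tops \<Longrightarrow> X < X0 \<or> (X = X0 \<and> Y = Y0) \<or> U + 2 \<le> X \<or> (U + 1 \<le> X \<and> Y + Lo < B^T)"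
  defines "W \<equiv> U * bpow B T (int T - int j) + Lo * bpow B T (int T - int j - 1)"
    and "c0 \<equiv> X0 * bpow B T (int T - int j) - Y0 * bpow B T (int T - int j - 1)"
  shows "c0 \<in> Cs" "c0 \<le> W" "greedy_step Cs W = W - c0"
proof -
  show c0in: "c0 \<in> Cs" unfolding c0_def using tops_in[OF t0 j] .
  have Pnn: "0 \<le> bpow B T (int T - int j)" "0 \<le> bpow B T (int T - int j - 1)"
    unfolding bpow_def using B2 by auto
  have sh0: "shape B T X0 Y0" using tops_shape[OF t0] .
  hence "0 \<le> Y0" unfolding shape_def by simp
  have "W - c0 = (U - X0) * bpow B T (int T - int j) + (Lo + Y0) * bpow B T (int T - int j - 1)"
    unfolding W_def c0_def by (simp add: algebra_simps)
  also have "\<dots> \<ge> 0" using XU Pnn Lo \<open>0 \<le> Y0\<close> by simp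
  finally show c0W: "c0 \<le> W" by simp
  have "Max {c \<in> Cs. c \<le> W} = c0"
  proof (rule Max_eqI)
    show "finite {c \<in> Cs. c \<le> W}" using fin by simp
    show "c0 \<in> {c \<in> Cs. c \<le> W}" using c0in c0W by simp
    fix c assume "c \<in> {c \<in> Cs. c \<le> W}"
    hence c: "c \<in> Cs" "c \<le> W" by auto
    obtain X Y j' where h: "(X,Y) \<in> tops" "1 \<le> j'" "j' \<le> T"
      "c = X * bpow B T (int T - int j') - Y * bpow B T (int T - int j' - 1)" using Cs_elim[OF c(1)] by blast
    show "c \<le> c0" unfolding h(4) c0_def
      by (rule level_cmp[OF B2 j h(2,3) tops_shape[OF h(1)] sh0 U Lo cmp[OF h(1)]])
        (use c(2) h(4) W_def in simp)
  qed
  thus "greedy_step Cs W = W - c0" unfolding greedy_step_def by simp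
qed

end


locale cf = cs \<delta> F f g K B T endm
  for \<delta> :: "'q \<Rightarrow> 'a \<Rightarrow> 'q \<times> 'a \<times> dir" and F f g K B T endm +
  fixes q :: 'q and h :: nat and tp :: "nat \<Rightarrow> 'a" and j :: nat
  assumes h1: "1 \<le> h" and hT: "h < T" and tp1: "tp 1 = endm" and hF: "q \<in> F \<Longrightarrow> h = 2"
    and j: "1 \<le> j" "j \<le> T" and finC: "finite Cs"
begin

definition "C' = tm_step \<delta> F (q,h,tp)"
definition "d i = dgt (q,h,tp) i"
definition "e i = dgt C' i"
definition "U r = (\<Sum>i\<in>{r<..T}. d i * B^(T-i))"
definition "Lo r = (\<Sum>i\<in>{0<..r}. e i * B^(T-i))"
definition "P = bpow B T (int T - int j)"
definition "P' = bpow B T (int T - int j - 1)"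
definition "Wr r = U r * P + Lo r * P'"
definition "win i \<longleftrightarrow> (if h = 1 then i = 1 \<or> i = 2 else i = h - 1 \<or> i = h \<or> i = h + 1)"

lemma d_g: "i \<noteq> h \<Longrightarrow> d i = int (g (tp i))" unfolding d_def dgt_def by simp
lemma d_h: "d h = pcode f g K q (tp h)" unfolding d_def dgt_def by simp
lemma d_rng: "1 \<le> d i" "d i \<le> B - 2" unfolding d_def using dgt_rng by auto
lemma e_rng: "1 \<le> e i" "e i \<le> B - 2" unfolding e_def using dgt_rng by auto

lemma e_out: "\<not> win i \<Longrightarrow> e i = d i"
proof -
  assume w: "\<not> win i"
  show ?thesis
  proof (cases "q \<in> F")
    case True thus ?thesis unfolding e_def d_def C'_def tm_step_def by simp
  next
    case False
    obtain q' a' dd where qd: "\<delta> q (tp h) = (q', a', dd)" by (metis prod.exhaust)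
    have C': "C' = (q', if dd = L then h - 1 else h + 1, tp(h := a'))"
      unfolding C'_def tm_step_def using False qd by simp
    have "i \<noteq> h" "i \<noteq> (if dd = L then h - 1 else h + 1)"
    proof -
      show "i \<noteq> h" using w unfolding win_def by (cases "h = 1") auto
      show "i \<noteq> (if dd = L then h - 1 else h + 1)"
      proof (cases "h = 1")
        case True
        obtain q'' where "\<delta> q endm = (q'', endm, R)" using endmarker[OF False] by blast
        hence "dd = R" using qd True tp1 by simp
        thus ?thesis using w True unfolding win_def by auto
      next
        case False thus ?thesis using w unfolding win_def by auto
      qed
    qed
    thus ?thesis unfolding e_def d_def C' dgt_def by simp
  qed
qed

lemma U_split: "r < T \<Longrightarrow> U r = d (Suc r) * B^(T - Suc r) + U (Suc r)"
proof -
  assume r: "r < T"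
  have "{r<..T} = insert (Suc r) {Suc r<..T}" using r by auto
  thus ?thesis unfolding U_def by simp
qed

lemma Lo_split: "Lo (Suc r) = Lo r + e (Suc r) * B^(T - Suc r)"
proof -
  have "{0<..Suc r} = insert (Suc r) {0<..r}" by auto
  thus ?thesis unfolding Lo_def by (simp add: add.commute)
qed

lemma U_bnd: "r \<le> T \<Longrightarrow> 0 \<le> U r \<and> U r + 1 \<le> B^(T-r) \<and> (r < T \<longrightarrow> U r + 2 \<le> B^(T-r))"
proof (induction "T - r" arbitrary: r)
  case 0
  hence "r = T" by simp
  thus ?case unfolding U_def by simp
next
  case (Suc n)
  hence r: "r < T" by simp
  have IH: "0 \<le> U (Suc r)" "U (Suc r) + 1 \<le> B^(T - Suc r)" using Suc(1)[of "Suc r"] Suc(2) r by auto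
  have e: "B^(T-r) = B * B^(T - Suc r)" using r by (metis Suc_diff_Suc power_Suc)
  have "d (Suc r) * B^(T - Suc r) \<le> (B - 2) * B^(T - Suc r)" using d_rng B2 by (intro mult_right_mono) auto
  moreover have "0 \<le> d (Suc r) * B^(T - Suc r)" using d_rng(1)[of "Suc r"] B2 by (intro mult_nonneg_nonneg) auto
  moreover have "1 \<le> B^(T - Suc r)" using B2 by simp
  ultimately show ?case using U_split[OF r] IH e r by (simp add: algebra_simps)
qed

lemma Lo_bnd: "r \<le> T \<Longrightarrow> 0 \<le> Lo r \<and> Lo r + B^(T-r) \<le> B^T"
proof (induction r)
  case 0 thus ?case unfolding Lo_def by simp
next
  case (Suc r)
  hence r: "r < T" by simp
  have e: "B^(T-r) = B * B^(T - Suc r)" using r by (metis Suc_diff_Suc power_Suc)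
  have "e (Suc r) * B^(T - Suc r) \<le> (B - 2) * B^(T - Suc r)" using e_rng B2 by (intro mult_right_mono) auto
  moreover have "0 \<le> e (Suc r) * B^(T - Suc r)" using e_rng(1)[of "Suc r"] B2 by (intro mult_nonneg_nonneg) auto
  moreover have "0 \<le> B^(T - Suc r)" using B2 by simp
  ultimately show ?case using Lo_split[of r] Suc e r by (simp add: algebra_simps)
qed

lemma W0: "Wr 0 = enc f g K B T (q,h,tp) * P"
  unfolding Wr_def U_def Lo_def enc_eq d_def by simp

lemma WT: "Wr T = enc f g K B T C' * P'"
  unfolding Wr_def U_def Lo_def enc_eq e_def by simp

end


context cs begin

lemma powle: "m \<le> n \<Longrightarrow> B^m \<le> B^n" using B2 by (intro power_increasing) auto
lemma powpos: "0 < B^n" using B2 by simp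

lemma lt_pow: "(N::int) < B^m \<Longrightarrow> m + k \<le> n \<Longrightarrow> N * B^k < B^n"
proof -
  assume a: "N < B^m" "m + k \<le> n"
  have "N * B^k < B^m * B^k" using a powpos by simp
  also have "\<dots> = B^(m+k)" by (simp add: power_add)
  also have "\<dots> \<le> B^n" using a by (intro powle) auto
  finally show ?thesis .
qed

lemma ge_pow: "B^m \<le> (N::int) \<Longrightarrow> n \<le> m + k \<Longrightarrow> B^n \<le> N * B^k"
proof -
  assume a: "B^m \<le> N" "n \<le> m + k"
  have "B^n \<le> B^(m+k)" using a by (intro powle) auto
  also have "\<dots> = B^m * B^k" by (simp add: power_add)
  also have "\<dots> \<le> N * B^k" using a powpos by (intro mult_right_mono) (auto simp: less_imp_le)
  finally show ?thesis .
qed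

lemma mul_lt: "(a::int) < b \<Longrightarrow> a * B^k < b * B^k" using powpos by simp
lemma mul_le: "(a::int) \<le> b \<Longrightarrow> a * B^k \<le> b * B^k" using powpos by (simp add: less_imp_le)

end

context cf begin

lemma win_h: "win h" unfolding win_def by auto

lemma F1: "r < T \<Longrightarrow> B^(T-r) \<le> X \<Longrightarrow> U r + 2 \<le> X" using U_bnd[of r] by auto
lemma F2: "r \<le> T \<Longrightarrow> 0 \<le> Y \<Longrightarrow> Y < B^(T-r) \<Longrightarrow> Y + Lo r < B^T" using Lo_bnd[of r] by auto

lemma copy_step:
  assumes r: "r < T" and nw: "\<not> win (Suc r)"
  shows "\<exists>c\<in>Cs. c \<le> Wr r \<and> greedy_step Cs (Wr r) = Wr (Suc r)"
proof -
  define p where "p = Suc r"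
  define M where "M = B^(T-p)"
  have pT: "p \<le> T" using r p_def by simp
  have ph: "p \<noteq> h" using nw win_h p_def by auto
  have dp: "d p = int (g (tp p))" using d_g[OF ph] .
  define X0 where "X0 = d p * M"
  have t0: "(X0, X0) \<in> tops" unfolding X0_def M_def dp using tops_copy[of p "tp p"] pT p_def by simp
  have Ur: "U r = X0 + U p" unfolding X0_def M_def p_def using U_split[OF r] by simp
  have Upb: "0 \<le> U p" "U p + 1 \<le> M" using U_bnd[OF pT] M_def by auto
  have Urb: "0 \<le> U r" "U r + 2 \<le> B^(T-r)" using U_bnd[of r] r by auto
  have BT: "B^(T-r) \<le> B^T" by (rule powle) simp
  have Lob: "0 \<le> Lo r" "Lo r < B^T" using Lo_bnd[of r] r powpos[of "T-r"] by auto
  have BTr: "B^(T-r) = B * M" unfolding M_def p_def using r by (metis Suc_diff_Suc power_Suc)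
  have Mpos: "0 < M" unfolding M_def by (rule powpos)
  have dpr: "1 \<le> d p" "d p \<le> int K" using dp gd by auto
  have cmp: "X < X0 \<or> (X = X0 \<and> Y = X0) \<or> U r + 2 \<le> X \<or> (U r + 1 \<le> X \<and> Y + Lo r < B^T)"
    if t: "(X,Y) \<in> tops" for X Y
  proof -
    have Y0: "0 \<le> Y" using tops_shape[OF t] unfolding shape_def by simp
    from t show ?thesis
    proof (cases rule: tops_cases)
      case (cp a i)
      consider "i \<le> r" | "i = p" | "p < i" using p_def by linarith
      thus ?thesis
      proof cases
        case 1
        have "B^(T-r) \<le> int (g a) * B^(T-i)" by (rule ge_pow[of 0]) (use gd 1 in auto)
        thus ?thesis using F1[OF r] cp by auto
      next
        case 2
        consider "int (g a) < d p" | "int (g a) = d p" | "d p < int (g a)" by linarith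
        thus ?thesis
        proof cases
          case 1 thus ?thesis using cp 2 mul_lt[OF 1, of "T-p"] unfolding X0_def M_def by simp
        next
          case 3
          have "(d p + 1) * B^(T-p) \<le> int (g a) * B^(T-p)" using 3 by (intro mul_le) simp
          hence "U r + 1 \<le> X" using cp 2 Ur Upb unfolding X0_def M_def by (simp add: algebra_simps)
          moreover have "Y < B^(T-r)"
          proof -
            have "int (g a) < B^1" using gd[of a] by simp
            hence "int (g a) * B^(T-p) < B^(T-r)" by (rule lt_pow) (use p_def r in auto)
            thus ?thesis using cp 2 by simp
          qed
          ultimately show ?thesis using F2[of r Y] r Y0 by auto
        qed (use cp 2 X0_def M_def in simp)
      next
        case 3
        have "int (g a) < B^1" using gd[of a] by simp
        hence "X < B^(T-p)" unfolding cp(3) by (rule lt_pow) (use 3 cp in auto)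
        moreover have "B^(T-p) \<le> X0" unfolding X0_def M_def using mul_le[OF dpr(1)] by simp
        ultimately show ?thesis by simp
      qed
    next
      case (tr q' am a ap i)
      define N where "N = (int (g am) * B + pcode f g K q' a) * B + int (g ap)"
      have Nb: "0 \<le> N" "N < B^3" "B^2 \<le> N" unfolding N_def using num3_bnd[OF gdB pcB gdB] gd by auto
      have XN: "X = N * B^(T-i-1)" using tr N_def by simp
      obtain y1 y2 y3 where v: "Y = ((y1 * B + y2) * B + y3) * B^(T-i-1)" "0 \<le> y1" "y1 \<le> B - 2"
         "0 \<le> y2" "y2 \<le> B - 2" "0 \<le> y3" "y3 \<le> B - 2" using v_form[OF tr(1,2)] tr(4) by blast
      have Yb: "Y < B^(T-i+2)"
      proof -
        have "(y1 * B + y2) * B + y3 < B^3" using num3_bnd[of y1 y2 y3] v by auto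
        thus ?thesis unfolding v(1) by (rule lt_pow) (use tr in auto)
      qed
      consider "i \<le> p" | "i = p + 1" | "p + 2 \<le> i" by linarith
      thus ?thesis
      proof cases
        case 1
        have "B^(T-r) \<le> X" unfolding XN by (rule ge_pow[OF Nb(3)]) (use 1 tr p_def in auto)
        thus ?thesis using F1[OF r] by auto
      next
        case 3
        have "X < B^(T-p)" unfolding XN by (rule lt_pow[OF Nb(2)]) (use 3 tr in auto)
        moreover have "B^(T-p) \<le> X0" unfolding X0_def M_def using mul_le[OF dpr(1)] by simp
        ultimately show ?thesis by simp
      next
        case 2
        define M2 where "M2 = B^(T-i-1)"
        have M2pos: "0 < M2" unfolding M2_def by (rule powpos)
        have MM: "M = B^2 * M2" unfolding M_def M2_def using 2 tr by (intro pow_shift) arith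
        have pT': "p < T" using 2 tr by arith
        have Up: "U p = d (Suc p) * (B * M2) + U (Suc p)"
        proof -
          have "B^(T - Suc p) = B^1 * M2" unfolding M2_def using 2 tr by (intro pow_shift) arith
          thus ?thesis using U_split[OF pT'] by simp
        qed
        have Usp: "0 \<le> U (Suc p)" "U (Suc p) + 1 \<le> B * M2"
        proof -
          have "B^(T - Suc p) = B^1 * M2" unfolding M2_def using 2 tr by (intro pow_shift) arith
          thus "0 \<le> U (Suc p)" "U (Suc p) + 1 \<le> B * M2" using U_bnd[of "Suc p"] pT' by auto
        qed
        have sph: "Suc p \<noteq> h"
        proof
          assume "Suc p = h"
          hence "win p" unfolding win_def using p_def by auto
          thus False using nw p_def by simp
        qed
        have d2: "d (Suc p) \<le> int K" using d_g[OF sph] gd by simp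
        have X0M: "X0 = d p * B^2 * M2" unfolding X0_def MM by simp
        consider "int (g am) < d p" | "int (g am) = d p" | "d p < int (g am)" by linarith
        thus ?thesis
        proof cases
          case 1
          have "N < (int (g am) + 1) * B^2" unfolding N_def using three_digit(2)[OF B2] gdB pcB by auto
          also have "\<dots> \<le> d p * B^2" using 1 B2 by (intro mult_right_mono) auto
          finally have "N * M2 < d p * B^2 * M2" using M2pos by simp
          thus ?thesis using XN X0M M2_def by simp
        next
          case 3
          have "(d p + 1) * B^2 \<le> int (g am) * B^2" using 3 B2 by (intro mult_right_mono) auto
          also have "\<dots> \<le> N" unfolding N_def using three_digit(1)[OF B2 pcB[of q' a] gdB[of ap], of "int (g am)"]
              mult_nonneg_nonneg[OF pcB(1)[of q' a], of B] B2 by linarith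
          finally have "(d p + 1) * B^2 * M2 \<le> N * M2" using M2pos by (intro mult_right_mono) auto
          hence "U r + 1 \<le> X" using XN M2_def Ur X0M Upb MM by (simp add: algebra_simps)
          moreover have "Y < B^(T-r)" using Yb 2 p_def tr by (simp add: Suc_diff_Suc)
          ultimately show ?thesis using F2[of r Y] r Y0 by auto
        next
          case 2
          have "int K + 1 \<le> pcode f g K q' a" by (rule pc)
          hence "(d (Suc p) + 1) * B \<le> pcode f g K q' a * B" using d2 B2 by (intro mult_right_mono) auto
          hence "d p * B^2 + (d (Suc p) + 1) * B \<le> N" unfolding N_def
            using three_digit(1)[OF B2 pcB[of q' a] gdB[of ap], of "int (g am)"]
              \<open>int (g am) = d p\<close> by simp
          hence "(d p * B^2 + (d (Suc p) + 1) * B) * M2 \<le> N * M2" using M2pos by (intro mult_right_mono) auto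
          hence "U r + 1 \<le> X" using XN M2_def Ur X0M Up Usp by (simp add: algebra_simps)
          moreover have "Y < B^(T-r)" using Yb \<open>i = p + 1\<close> p_def tr by (simp add: Suc_diff_Suc)
          ultimately show ?thesis using F2[of r Y] r Y0 by auto
        qed
      qed
    next
      case (le q' ap)
      define N where "N = pcode f g K q' endm * B + int (g ap)"
      have XN: "X = N * B^(T-2)" using le N_def by simp
      have Nb: "B \<le> N" unfolding N_def using num2_bnd[OF pcB gdB] pc1 by auto
      show ?thesis
      proof (cases "r = 0")
        case False
        have "B^(T-r) \<le> X" unfolding XN by (rule ge_pow[of 1]) (use Nb False T3 in auto)
        thus ?thesis using F1[OF r] by auto
      next
        case True
        hence p1: "p = 1" using p_def by simp
        have "int K + 1 \<le> pcode f g K q' endm" by (rule pc)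
        hence "(int K + 1) * B \<le> pcode f g K q' endm * B" using B2 by (intro mult_right_mono) auto
        moreover have "(d p + 1) * B \<le> (int K + 1) * B" using dpr B2 by (intro mult_right_mono) auto
        ultimately have "(d p + 1) * B \<le> N" unfolding N_def using gdB[of ap] by linarith
        hence "(d p + 1) * B * B^(T-2) \<le> N * B^(T-2)" by (rule mul_le)
        moreover have "M = B^(T-2) * B^1" unfolding M_def p1 using T3 by (intro pow_shift) arith
        ultimately have "U r + 1 \<le> X" using XN Ur Upb X0_def by (simp add: algebra_simps)
        moreover have "Y < B^(T-r)" using tops_shape[OF t] True unfolding shape_def by simp
        ultimately show ?thesis using F2[of r Y] r Y0 by auto
      qed
    qed
  qed
  have gp: "X0 * P - X0 * P' \<in> Cs" "X0 * P - X0 * P' \<le> Wr r" "greedy_step Cs (Wr r) = Wr r - (X0 * P - X0 * P')"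
  proof -
    have a: "U r + 2 \<le> B^T" using Urb BT by simp
    have b: "X0 \<le> U r" using Ur Upb by simp
    show "X0 * P - X0 * P' \<in> Cs" "X0 * P - X0 * P' \<le> Wr r" "greedy_step Cs (Wr r) = Wr r - (X0 * P - X0 * P')"
      using greedy_pick[OF finC j t0 Urb(1) a Lob b cmp] unfolding Wr_def P_def P'_def by auto
  qed
  have "Wr r - (X0 * P - X0 * P') = Wr (Suc r)"
  proof -
    have "e p = d p" using e_out nw p_def by simp
    hence "Lo p = Lo r + X0" unfolding X0_def M_def p_def using Lo_split[of r] by simp
    thus ?thesis unfolding Wr_def using Ur p_def by (simp add: algebra_simps)
  qed
  thus ?thesis using gp by auto
qed

end


context cf begin

lemma trans_step:
  assumes h2: "2 \<le> h"
  shows "\<exists>c\<in>Cs. c \<le> Wr (h-2) \<and> greedy_step Cs (Wr (h-2)) = Wr (Suc h)"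
proof -
  define r where "r = h - 2"
  define M where "M = B^(T - Suc h)"
  have hT1: "h \<le> T - 1" using hT by simp
  have rT: "r < T" using r_def hT by simp
  have p2: "B^(T - (h-1)) = B^2 * M" unfolding M_def using h2 hT by (intro pow_shift) arith
  have p1: "B^(T - h) = B^1 * M" unfolding M_def using h2 hT by (intro pow_shift) arith
  have p3: "B^(T - r) = B^3 * M" unfolding M_def r_def using h2 hT by (intro pow_shift) arith
  have Mpos: "0 < M" unfolding M_def by (rule powpos)
  have hm1: "h - 1 \<noteq> h" "Suc h \<noteq> h" using h2 by auto
  define d1 where "d1 = d (h-1)"
  define d2 where "d2 = d h"
  define d3 where "d3 = d (Suc h)"
  have d1g: "d1 = int (g (tp (h-1)))" unfolding d1_def using d_g[OF hm1(1)] .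
  have d3g: "d3 = int (g (tp (Suc h)))" unfolding d3_def using d_g[OF hm1(2)] .
  have d2p: "d2 = pcode f g K q (tp h)" unfolding d2_def using d_h .
  define N0 where "N0 = (d1 * B + d2) * B + d3"
  define X0 where "X0 = N0 * M"
  define Y0 where "Y0 = trans_v \<delta> F f g K B T q (tp (h-1)) (tp h) (tp (Suc h)) h"
  have X0u: "X0 = trans_u f g K B T q (tp (h-1)) (tp h) (tp (Suc h)) h"
    unfolding X0_def N0_def M_def d1g d2p d3g u_form[OF h2 hT1] by simp
  have t0: "(X0, Y0) \<in> tops" unfolding X0u Y0_def by (rule tops_trans[OF h2 hT1])
  have N0b: "d1 * B^2 + d2 * B \<le> N0" "N0 < (d1 + 1) * B^2"
    unfolding N0_def d1g d2p d3g using three_digit[OF B2 pcB gdB] by auto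
  have d1r: "1 \<le> d1" "d1 \<le> int K" using d1g gd by auto
  have d2r: "1 \<le> d2" using d2p pc1 by simp
  have Ur: "U r = X0 + U (Suc h)"
  proof -
    have a: "Suc r = h - 1" "Suc (h-1) = h" using r_def h2 by auto
    have "U r = d (h-1) * B^(T - (h-1)) + U (h-1)" using U_split[OF rT] a by simp
    moreover have "U (h-1) = d h * B^(T - h) + U h" using U_split[of "h-1"] a hT by simp
    moreover have "U h = d (Suc h) * B^(T - Suc h) + U (Suc h)" using U_split[of h] hT by simp
    ultimately show ?thesis unfolding X0_def N0_def d1_def d2_def d3_def p1 p2 M_def
      by (simp add: algebra_simps power2_eq_square)
  qed
  have Usb: "0 \<le> U (Suc h)" "U (Suc h) + 1 \<le> M" using U_bnd[of "Suc h"] hT M_def by auto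
  have Urb: "0 \<le> U r" "U r + 2 \<le> B^(T-r)" using U_bnd[of r] rT by auto
  have BT: "B^(T-r) \<le> B^T" by (rule powle) simp
  have Lob: "0 \<le> Lo r" "Lo r < B^T" using Lo_bnd[of r] rT powpos[of "T-r"] by auto
  have X0ge: "B^2 * M \<le> X0"
  proof -
    have "1 * B^2 \<le> d1 * B^2" using d1r by (intro mult_right_mono) auto
    moreover have "0 \<le> d2 * B" using d2r B2 by simp
    ultimately have "B^2 \<le> N0" using N0b by linarith
    thus ?thesis unfolding X0_def using Mpos by (simp add: mult_right_mono)
  qed
  have cmp: "X < X0 \<or> (X = X0 \<and> Y = Y0) \<or> U r + 2 \<le> X \<or> (U r + 1 \<le> X \<and> Y + Lo r < B^T)"
    if t: "(X,Y) \<in> tops" for X Y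
  proof -
    have Y0: "0 \<le> Y" using tops_shape[OF t] unfolding shape_def by simp
    have bigger: "U r + 1 \<le> X" if "(N0 + 1) * M \<le> X" for X
      using that Ur Usb unfolding X0_def by (simp add: algebra_simps)
    from t show ?thesis
    proof (cases rule: tops_cases)
      case (cp a i)
      consider "i \<le> r" | "i = h - 1" | "h \<le> i" using r_def h2 by linarith
      thus ?thesis
      proof cases
        case 1
        have "B^(T-r) \<le> int (g a) * B^(T-i)" by (rule ge_pow[of 0]) (use gd 1 in auto)
        thus ?thesis using F1[OF rT] cp by auto
      next
        case 2
        have XX: "X = int (g a) * B^2 * M" using cp 2 p2 by simp
        show ?thesis
        proof (cases "int (g a) \<le> d1")
          case True
          have "int (g a) * B^2 \<le> d1 * B^2" using True B2 by (intro mult_right_mono) auto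
          moreover have "0 < d2 * B" using d2r B2 by simp
          ultimately have "int (g a) * B^2 < N0" using N0b by linarith
          thus ?thesis using XX X0_def Mpos by simp
        next
          case False
          have "(d1 + 1) * B^2 \<le> int (g a) * B^2" using False B2 by (intro mult_right_mono) auto
          hence "(N0 + 1) * M \<le> X" using N0b XX Mpos by (intro order_trans[OF mult_right_mono[of "N0+1" "(d1+1)*B^2" M]]) (auto intro: mult_right_mono)
          hence "U r + 1 \<le> X" by (rule bigger)
          moreover have "Y < B^(T-r)"
          proof -
            have "int (g a) * B^2 < B * B^2" using gd[of a] B2 by simp
            hence "int (g a) * B^2 * M < B * B^2 * M" using Mpos by (rule mult_strict_right_mono)
            thus ?thesis using cp XX p3 by (simp add: power3_eq_cube power2_eq_square algebra_simps)
          qed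
          ultimately show ?thesis using F2[of r Y] rT Y0 by auto
        qed
      next
        case 3
        have "int (g a) < B^1" using gd[of a] by simp
        hence "X < B^(T-(h-1))" unfolding cp(3) by (rule lt_pow) (use 3 cp h2 in auto)
        thus ?thesis using X0ge p2 by simp
      qed
    next
      case (tr q' am a ap i)
      define N where "N = (int (g am) * B + pcode f g K q' a) * B + int (g ap)"
      have Nb: "0 \<le> N" "N < B^3" "B^2 \<le> N" unfolding N_def using num3_bnd[OF gdB pcB gdB] gd by auto
      have XN: "X = N * B^(T-i-1)" using tr N_def by simp
      obtain y1 y2 y3 where v: "Y = ((y1 * B + y2) * B + y3) * B^(T-i-1)" "0 \<le> y1" "y1 \<le> B - 2"
         "0 \<le> y2" "y2 \<le> B - 2" "0 \<le> y3" "y3 \<le> B - 2" using v_form[OF tr(1,2)] tr(4) by blast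
      have Yb: "Y < B^(T-i+2)"
      proof -
        have "(y1 * B + y2) * B + y3 < B^3" using num3_bnd[of y1 y2 y3] v by auto
        thus ?thesis unfolding v(1) by (rule lt_pow) (use tr in auto)
      qed
      consider "i \<le> h - 1" | "i = h" | "h + 1 \<le> i" by linarith
      thus ?thesis
      proof cases
        case 1
        have "B^(T-r) \<le> X" unfolding XN by (rule ge_pow[OF Nb(3)]) (use 1 tr r_def h2 in auto)
        thus ?thesis using F1[OF rT] by auto
      next
        case 3
        have "X < B^(T-(h-1))" unfolding XN by (rule lt_pow[OF Nb(2)]) (use 3 tr h2 in auto)
        thus ?thesis using X0ge p2 by simp
      next
        case 2
        have XM: "X = N * M" using XN 2 M_def by simp
        consider "N < N0" | "N = N0" | "N0 < N" by linarith
        thus ?thesis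
        proof cases
          case 1 thus ?thesis using XM X0_def Mpos by simp
        next
          case 3
          have "(N0 + 1) * M \<le> X" using 3 XM Mpos by (simp add: mult_right_mono)
          hence "U r + 1 \<le> X" by (rule bigger)
          moreover have "Y < B^(T-r)"
          proof -
            have "T - r = T - i + 2" using 2 r_def h2 hT by arith
            thus ?thesis using Yb by simp
          qed
          ultimately show ?thesis using F2[of r Y] rT Y0 by auto
        next
          case eq: 2
          have "int (g am) = d1 \<and> pcode f g K q' a = d2 \<and> int (g ap) = d3"
            using three_digit_uniq[of "pcode f g K q' a" B "int (g ap)" d2 d3 "int (g am)" d1]
              pcB[of q' a] gdB[of ap] eq B2 d2p pcB[of q "tp h"] d3g gdB[of "tp (Suc h)"]
            unfolding N_def N0_def by fastforce
          hence "g am = g (tp (h-1))" "pcode f g K q' a = pcode f g K q (tp h)" "g ap = g (tp (Suc h))"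
            using d1g d2p d3g by auto
          hence "am = tp (h-1)" "q' = q" "a = tp h" "ap = tp (Suc h)"
            using inj_g pc_inj by (auto dest: injD)
          hence "Y = Y0" using tr 2 Y0_def by simp
          moreover have "X = X0" using eq XM X0_def by simp
          ultimately show ?thesis by simp
        qed
      qed
    next
      case (le q' ap)
      define N where "N = pcode f g K q' endm * B + int (g ap)"
      have XN: "X = N * B^(T-2)" using le N_def by simp
      have Nb: "B \<le> N" unfolding N_def using num2_bnd[OF pcB gdB] pc1 by auto
      show ?thesis
      proof (cases "r = 0")
        case False
        have "B^(T-r) \<le> X" unfolding XN by (rule ge_pow[of 1]) (use Nb False T3 in auto)
        thus ?thesis using F1[OF rT] by auto
      next
        case True
        hence hh: "h = 2" using r_def h2 by simp
        have "int K + 1 \<le> pcode f g K q' endm" by (rule pc)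
        hence "(int K + 1) * B \<le> pcode f g K q' endm * B" using B2 by (intro mult_right_mono) auto
        moreover have "(d1 + 1) * B \<le> (int K + 1) * B" using d1r B2 by (intro mult_right_mono) auto
        ultimately have "(d1 + 1) * B \<le> N" unfolding N_def using gdB[of ap] by linarith
        hence "(d1 + 1) * B * B^(T-2) \<le> N * B^(T-2)" by (rule mul_le)
        moreover have "B^(T-2) = B^1 * M" unfolding M_def hh using T3 by (intro pow_shift) arith
        moreover have "(N0 + 1) * M \<le> (d1 + 1) * B^2 * M" using N0b Mpos by (intro mult_right_mono) auto
        ultimately have "(N0 + 1) * M \<le> X" using XN by (simp add: power2_eq_square algebra_simps)
        hence "U r + 1 \<le> X" by (rule bigger)
        moreover have "Y < B^(T-r)" using tops_shape[OF t] True unfolding shape_def by simp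
        ultimately show ?thesis using F2[of r Y] rT Y0 by auto
      qed
    qed
  qed
  have gp: "X0 * P - Y0 * P' \<in> Cs" "X0 * P - Y0 * P' \<le> Wr r" "greedy_step Cs (Wr r) = Wr r - (X0 * P - Y0 * P')"
  proof -
    have a: "U r + 2 \<le> B^T" using Urb BT by simp
    have b: "X0 \<le> U r" using Ur Usb by simp
    show "X0 * P - Y0 * P' \<in> Cs" "X0 * P - Y0 * P' \<le> Wr r" "greedy_step Cs (Wr r) = Wr r - (X0 * P - Y0 * P')"
      using greedy_pick[OF finC j t0 Urb(1) a Lob b cmp] unfolding Wr_def P_def P'_def by auto
  qed
  obtain hm where hm: "h = Suc hm" using h2 by (cases h) auto
  have th: "T - Suc hm + 1 = T - hm" using hm hT by arith
  have Ye: "Y0 = e (h-1) * B^(T-(h-1)) + e h * B^(T-h) + e (Suc h) * B^(T - Suc h)"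
  proof (cases "q \<in> F")
    case True
    hence "C' = (q,h,tp)" unfolding C'_def tm_step_def by simp
    hence "e = d" unfolding e_def d_def by (simp add: fun_eq_iff)
    thus ?thesis unfolding Y0_def trans_v_def trans_u_def using True hm th d_g[of hm] d_g[of "Suc (Suc hm)"] d_h
      by simp
  next
    case False
    obtain q' a' dd where qd: "\<delta> q (tp h) = (q', a', dd)" by (metis prod.exhaust)
    have C': "C' = (q', if dd = L then h - 1 else h + 1, tp(h := a'))"
      unfolding C'_def tm_step_def using False qd by simp
    show ?thesis
    proof (cases "dd = L")
      case True
      have "e (h-1) = pcode f g K q' (tp (h-1))" "e h = int (g a')" "e (Suc h) = int (g (tp (Suc h)))"
        unfolding e_def C' dgt_def using True h2 by auto
      thus ?thesis unfolding Y0_def trans_v_def using False qd True hm th by simp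
    next
      case dR: False
      have "e (h-1) = int (g (tp (h-1)))" "e h = int (g a')" "e (Suc h) = pcode f g K q' (tp (Suc h))"
        unfolding e_def C' dgt_def using dR h2 by auto
      thus ?thesis unfolding Y0_def trans_v_def using False qd dR hm th by simp
    qed
  qed
  have "Wr r - (X0 * P - Y0 * P') = Wr (Suc h)"
  proof -
    have a: "Suc r = h - 1" "Suc (h-1) = h" using r_def h2 by auto
    have "Lo (Suc h) = Lo r + Y0" unfolding Ye using Lo_split[of r] Lo_split[of "h-1"] Lo_split[of h] a
      by simp
    thus ?thesis unfolding Wr_def using Ur by (simp add: algebra_simps)
  qed
  thus ?thesis using gp r_def by auto
qed

end


context cf begin

lemma left_step:
  assumes h1': "h = 1"
  shows "\<exists>c\<in>Cs. c \<le> Wr 0 \<and> greedy_step Cs (Wr 0) = Wr 2"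
proof -
  define M where "M = B^(T - 2)"
  have Mpos: "0 < M" unfolding M_def by (rule powpos)
  have p1: "B^(T - 1) = B^1 * M" unfolding M_def using T3 by (intro pow_shift) arith
  have qF: "q \<notin> F" using hF h1' by auto
  obtain q' where qd: "\<delta> q endm = (q', endm, R)" using endmarker[OF qF] by blast
  define d1 where "d1 = d 1"
  define d2 where "d2 = d 2"
  have d1p: "d1 = pcode f g K q endm" unfolding d1_def using d_h h1' tp1 by simp
  have d2g: "d2 = int (g (tp 2))" unfolding d2_def using d_g[of 2] h1' by simp
  define N0 where "N0 = d1 * B + d2"
  define X0 where "X0 = N0 * M"
  define Y0 where "Y0 = (int (g endm) * B + pcode f g K q' (tp 2)) * M"
  have t0: "(X0, Y0) \<in> tops"
    using tops_left[OF qF, of "tp 2"] unfolding left_form X0_def Y0_def N0_def M_def d1p d2g qd by simp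
  have d1r: "int K + 1 \<le> d1" using d1p pc by simp
  have Ur: "U 0 = X0 + U 2"
  proof -
    have "U 0 = d 1 * B^(T - 1) + U 1" using U_split[of 0] T3 by simp
    moreover have "U 1 = d 2 * B^(T - 2) + U 2" using U_split[of 1] T3 by (simp add: numeral_2_eq_2)
    ultimately show ?thesis unfolding X0_def N0_def d1_def d2_def p1 M_def by (simp add: algebra_simps)
  qed
  have Usb: "0 \<le> U 2" "U 2 + 1 \<le> M" using U_bnd[of 2] T3 M_def by auto
  have Urb: "0 \<le> U 0" "U 0 + 2 \<le> B^T" using U_bnd[of 0] T3 by auto
  have Lob: "0 \<le> Lo 0" "Lo 0 < B^T" unfolding Lo_def using powpos by auto
  have N0ge: "d1 * B \<le> N0" unfolding N0_def d2g by simp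
  have X0ge: "d1 * B * M \<le> X0" unfolding X0_def using N0ge Mpos by (simp add: mult_right_mono)
  have cmp: "X < X0 \<or> (X = X0 \<and> Y = Y0) \<or> U 0 + 2 \<le> X \<or> (U 0 + 1 \<le> X \<and> Y + Lo 0 < B^T)"
    if t: "(X,Y) \<in> tops" for X Y
  proof -
    have Ysh: "0 \<le> Y" "Y < B^T" using tops_shape[OF t] unfolding shape_def by auto
    have Lo0: "Lo 0 = 0" unfolding Lo_def by simp
    have BMX0: "B * M \<le> X0"
    proof -
      have "1 * (B * M) \<le> d1 * (B * M)" using d1r B2 Mpos by (intro mult_right_mono) auto
      thus ?thesis using X0ge by (simp add: algebra_simps)
    qed
    from t show ?thesis
    proof (cases rule: tops_cases)
      case (cp a i)
      show ?thesis
      proof (cases "i = 1")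
        case True
        have "int (g a) * B < d1 * B" using gd[of a] d1r B2 by simp
        hence "int (g a) * B * M < d1 * B * M" using Mpos by (rule mult_strict_right_mono)
        thus ?thesis using cp True p1 X0ge by (simp add: algebra_simps)
      next
        case False
        have "int (g a) < B^1" using gd[of a] by simp
        hence "X < B^(T - 1)" unfolding cp(3) by (rule lt_pow) (use False cp in auto)
        thus ?thesis using p1 BMX0 by simp
      qed
    next
      case (tr q'' am a ap i)
      define N where "N = (int (g am) * B + pcode f g K q'' a) * B + int (g ap)"
      have Nb: "N < B^3" "N < (int (g am) + 1) * B^2"
        unfolding N_def using num3_bnd[OF gdB pcB gdB] three_digit(2)[OF B2 pcB gdB] by auto
      have XN: "X = N * B^(T-i-1)" using tr N_def by simp
      show ?thesis
      proof (cases "i = 2")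
        case True
        have M3: "M = B^1 * B^(T-i-1)" unfolding M_def using True T3 by (intro pow_shift) arith
        have "(int (g am) + 1) * B^2 \<le> d1 * B^2" using gd[of am] d1r by (intro mult_right_mono) auto
        hence "N < d1 * B^2" using Nb by simp
        hence "N * B^(T-i-1) < d1 * B^2 * B^(T-i-1)" by (rule mul_lt)
        thus ?thesis using XN M3 X0ge by (simp add: power2_eq_square algebra_simps)
      next
        case False
        have "X < B^(T - 1)" unfolding XN by (rule lt_pow[OF Nb(1)]) (use False tr in auto)
        thus ?thesis using p1 BMX0 by simp
      qed
    next
      case (le q'' ap)
      define N where "N = pcode f g K q'' endm * B + int (g ap)"
      have XN: "X = N * M" using le N_def M_def by simp
      consider "N < N0" | "N = N0" | "N0 < N" by linarith
      thus ?thesis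
      proof cases
        case 1 thus ?thesis using XN X0_def Mpos by simp
      next
        case 3
        have "(N0 + 1) * M \<le> X" using 3 XN Mpos by (simp add: mult_right_mono)
        hence "U 0 + 1 \<le> X" using Ur Usb X0_def by (simp add: algebra_simps)
        thus ?thesis using Ysh Lo0 by auto
      next
        case 2
        have "pcode f g K q'' endm = d1 \<and> int (g ap) = d2"
          using two_digit_uniq[of "int (g ap)" B d2 "pcode f g K q'' endm" d1] gdB[of ap] d2g gdB[of "tp 2"] 2 B2
          unfolding N_def N0_def by fastforce
        hence "q'' = q" "ap = tp 2" using d1p d2g pc_inj inj_g by (auto dest: injD)
        hence "Y = Y0" using le Y0_def M_def qd by simp
        moreover have "X = X0" using 2 XN X0_def by simp
        ultimately show ?thesis by simp
      qed
    qed
  qed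
  have gp: "X0 * P - Y0 * P' \<in> Cs" "X0 * P - Y0 * P' \<le> Wr 0" "greedy_step Cs (Wr 0) = Wr 0 - (X0 * P - Y0 * P')"
  proof -
    have b: "X0 \<le> U 0" using Ur Usb by simp
    show "X0 * P - Y0 * P' \<in> Cs" "X0 * P - Y0 * P' \<le> Wr 0" "greedy_step Cs (Wr 0) = Wr 0 - (X0 * P - Y0 * P')"
      using greedy_pick[OF finC j t0 Urb Lob b cmp] unfolding Wr_def P_def P'_def by auto
  qed
  have Ye: "Lo 2 = Y0"
  proof -
    have C': "C' = (q', 2, tp(1 := endm))" unfolding C'_def tm_step_def using qF qd h1' tp1 by simp
    have "e 1 = int (g endm)" "e 2 = pcode f g K q' (tp 2)" unfolding e_def C' dgt_def by auto
    moreover have "Lo 2 = e 1 * B^(T-1) + e 2 * B^(T-2)"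
      using Lo_split[of 0] Lo_split[of 1] unfolding Lo_def by (simp add: numeral_2_eq_2)
    ultimately show ?thesis unfolding Y0_def p1 M_def by (simp add: algebra_simps)
  qed
  have "Wr 0 - (X0 * P - Y0 * P') = Wr 2"
    unfolding Wr_def using Ur Ye by (simp add: Lo_def algebra_simps)
  thus ?thesis using gp by auto
qed

end


lemma chain:
  fixes G :: "int \<Rightarrow> int" and W :: "nat \<Rightarrow> int" and pos :: "nat \<Rightarrow> nat"
  assumes "\<And>k. k < n \<Longrightarrow> \<exists>c\<in>S. c \<le> W (pos k) \<and> G (W (pos k)) = W (pos (Suc k))"
  shows "(G^^n) (W (pos 0)) = W (pos n) \<and> (\<forall>i<n. \<exists>c\<in>S. c \<le> (G^^i) (W (pos 0)))"
  using assms
proof (induction n)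
  case 0 thus ?case by simp
next
  case (Suc n)
  hence IH: "(G^^n) (W (pos 0)) = W (pos n)" "\<forall>i<n. \<exists>c\<in>S. c \<le> (G^^i) (W (pos 0))" by auto
  obtain c where c: "c \<in> S" "c \<le> W (pos n)" "G (W (pos n)) = W (pos (Suc n))" using Suc.prems[of n] by auto
  have "(G^^Suc n) (W (pos 0)) = W (pos (Suc n))" using IH(1) c(3) by simp
  moreover have "\<forall>i<Suc n. \<exists>c\<in>S. c \<le> (G^^i) (W (pos 0))"
  proof (intro allI impI)
    fix i assume "i < Suc n"
    thus "\<exists>c\<in>S. c \<le> (G^^i) (W (pos 0))" using IH c by (cases "i = n") auto
  qed
  ultimately show ?case by blast
qed

context cf begin

lemma cf_main: "\<exists>m\<in>{T-1, T-2}. (\<forall>i<m. \<exists>c\<in>Cs. c \<le> (greedy_step Cs ^^ i) (Wr 0))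
   \<and> (greedy_step Cs ^^ m) (Wr 0) = Wr T"
proof -
  define a where "a = (if h = 1 then 1 else h - 1)"
  define b where "b = (if h = 1 then 2 else h + 1)"
  define gap where "gap = b - a"
  define pos where "pos k = (if k < a then k else k + gap)" for k
  define m where "m = T - gap"
  have a1: "1 \<le> a" unfolding a_def using h1 by auto
  have bT: "b \<le> T" unfolding b_def using hT T3 by auto
  have ab: "a < b" unfolding a_def b_def using h1 by auto
  have winc: "win i \<longleftrightarrow> a \<le> i \<and> i \<le> b" for i unfolding win_def a_def b_def by auto
  have gp: "gap = 1 \<or> gap = 2" unfolding gap_def a_def b_def using h1 by auto
  have mm: "m \<in> {T-1, T-2}" unfolding m_def using gp by auto
  have pos0: "pos 0 = 0" unfolding pos_def using a1 by simp
  have posm: "pos m = T" unfolding pos_def m_def gap_def using ab bT by auto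
  have step: "\<exists>c\<in>Cs. c \<le> Wr (pos k) \<and> greedy_step Cs (Wr (pos k)) = Wr (pos (Suc k))" if k: "k < m" for k
  proof -
    consider "Suc k < a" | "Suc k = a" | "a \<le> k" by linarith
    thus ?thesis
    proof cases
      case 1
      hence "pos k = k" "pos (Suc k) = Suc k" unfolding pos_def by auto
      moreover have "k < T" using 1 bT ab by simp
      moreover have "\<not> win (Suc k)" using 1 winc by simp
      ultimately show ?thesis using copy_step by simp
    next
      case 2
      hence pp: "pos k = a - 1" "pos (Suc k) = b" unfolding pos_def gap_def using ab by auto
      show ?thesis
      proof (cases "h = 1")
        case True
        thus ?thesis using pp left_step unfolding a_def b_def by simp
      next
        case False
        hence "2 \<le> h" using h1 by simp
        thus ?thesis using pp trans_step unfolding a_def b_def using False by (simp add: numeral_2_eq_2)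
      qed
    next
      case 3
      hence "pos k = k + gap" "pos (Suc k) = Suc (k + gap)" unfolding pos_def by auto
      moreover have "k + gap < T" using k m_def gap_def ab bT by simp
      moreover have "\<not> win (Suc (k + gap))" using 3 winc gap_def ab by (simp, arith)
      ultimately show ?thesis using copy_step by simp
    qed
  qed
  have "(greedy_step Cs ^^ m) (Wr (pos 0)) = Wr (pos m) \<and> (\<forall>i<m. \<exists>c\<in>Cs. c \<le> (greedy_step Cs ^^ i) (Wr (pos 0)))"
    by (rule chain[of m Cs Wr pos "greedy_step Cs"]) (rule step)
  thus ?thesis using mm pos0 posm by auto
qed

end


lemma tm_inv:
  assumes endm: "\<forall>q. q \<notin> F \<longrightarrow> (\<exists>q'. \<delta> q endm = (q', endm, R))"
  shows "(tm_step \<delta> F ^^ n) (init_config st endm bl xs) = (qq,hh,tt) \<Longrightarrow> 1 \<le> hh \<and> tt 1 = endm"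
proof (induction n arbitrary: qq hh tt)
  case 0 thus ?case unfolding init_config_def by auto
next
  case (Suc n)
  obtain q1 h1 tp1 where c: "(tm_step \<delta> F ^^ n) (init_config st endm bl xs) = (q1,h1,tp1)"
    by (metis prod.exhaust)
  have IH: "1 \<le> h1" "tp1 1 = endm" using Suc.IH[OF c] by auto
  have st: "tm_step \<delta> F (q1,h1,tp1) = (qq,hh,tt)" using Suc.prems c by simp
  show ?case
  proof (cases "q1 \<in> F")
    case True thus ?thesis using st IH unfolding tm_step_def by auto
  next
    case False
    obtain q' a' d where qd: "\<delta> q1 (tp1 h1) = (q', a', d)" by (metis prod.exhaust)
    have st': "(q', if d = L then h1 - 1 else h1 + 1, tp1(h1 := a')) = (qq,hh,tt)"
      using st False qd unfolding tm_step_def by simp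
    show ?thesis
    proof (cases "h1 = 1")
      case True
      obtain q'' where "\<delta> q1 endm = (q'', endm, R)" using endm False by blast
      hence "a' = endm" "d = R" using qd True IH by auto
      thus ?thesis using st' True IH by auto
    next
      case False
      thus ?thesis using st' IH by (auto split: if_splits)
    qed
  qed
qed

theorem lemma3p2:
  fixes \<delta> :: "'q::finite \<Rightarrow> 'a::finite \<Rightarrow> 'q \<times> 'a \<times> dir"
    and q0 qa qr :: 'q and blank endm :: 'a and Sig :: "'a set"
    and f :: "'q \<Rightarrow> nat" and g :: "'a \<Rightarrow> nat"
    and x :: "'a list" and T CM l j :: nat and B :: int
  defines "F \<equiv> {qa, qr}"
  defines "conf \<equiv> config_at \<delta> F q0 endm blank x"
  defines "Cs \<equiv> coin_set \<delta> F f g (card (UNIV :: 'a set)) B T endm"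
  assumes acc_rej: "qa \<noteq> qr"
    and Sig: "Sig \<subseteq> UNIV - {blank}" and x_in: "set x \<subseteq> Sig"
    and f_bij: "bij_betw f UNIV {1..(card (UNIV :: 'q set))}"
    and g_bij: "bij_betw g UNIV {1..(card (UNIV :: 'a set))}"
    and B_ge: "B \<ge> int (((card (UNIV :: 'q set)) + 1) * (card (UNIV :: 'a set)) + 2)"
    and endmarker: "\<forall>q. q \<notin> F \<longrightarrow> (\<exists>q'. \<delta> q endm = (q', endm, R))"
    and halting_shape: "\<forall>t\<ge>1. fst (conf t) \<in> F \<longrightarrow>
          fst (snd (conf t)) = 2 \<and> snd (snd (conf t)) 2 = blank \<and> snd (snd (conf t)) 3 = blank"
    and T_def: "T = CM * length x ^ l"
    and T_ge: "T \<ge> length x + 3"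
    and halts: "fst (conf (T + 1)) \<in> F"
    and head_lt: "\<forall>t\<ge>1. fst (snd (conf t)) < T"
    and j: "1 \<le> j" "j \<le> T"
  shows "\<exists>m \<in> {T - 1, T - 2}.
           (\<forall>i < m. \<exists>c \<in> Cs. c \<le> (greedy_step Cs ^^ i) (enc f g (card (UNIV :: 'a set)) B T (conf j) * bpow B T (int T - int j)))
         \<and> (greedy_step Cs ^^ m) (enc f g (card (UNIV :: 'a set)) B T (conf j) * bpow B T (int T - int j))
             = enc f g (card (UNIV :: 'a set)) B T (tm_step \<delta> F (conf j)) * bpow B T (int T - int j - 1)"
proof -
  note endm0 = endmarker
  define K where "K = card (UNIV :: 'a set)"
  define S where "S = card (UNIV :: 'q set)"
  have gr: "1 \<le> g a \<and> g a \<le> K" for a using bij_betwE[OF g_bij] unfolding K_def by auto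
  have fr: "1 \<le> f q \<and> f q \<le> S" for q using bij_betwE[OF f_bij] unfolding S_def by auto
  have Bh: "int (f q) * int K + int K + 2 \<le> B" for q
  proof -
    have "int (f q) * int K \<le> int S * int K" using fr[of q] by (intro mult_right_mono) auto
    thus ?thesis using B_ge unfolding K_def[symmetric] S_def[symmetric] by (simp add: algebra_simps)
  qed
  interpret cs \<delta> F f g K B T endm
  proof
    show "1 \<le> g a" "g a \<le> K" "1 \<le> f q" for a q using gr fr by auto
    show "int (f q) * int K + int K + 2 \<le> B" for q by (rule Bh)
    show "inj f" using bij_betw_imp_inj_on[OF f_bij] .
    show "inj g" using bij_betw_imp_inj_on[OF g_bij] .
    show "3 \<le> T" using T_ge by simp
    show "q \<notin> F \<Longrightarrow> \<exists>q'. \<delta> q endm = (q', endm, R)" for q using endm0 by blast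
  qed
  obtain q h tp where cj: "conf j = (q,h,tp)" by (metis prod.exhaust)
  have inv: "1 \<le> h" "tp 1 = endm" using tm_inv[where n="j-1" and st=q0 and bl=blank and xs=x and qq=q and hh=h and tt=tp and F=F and \<delta>=\<delta> and endm=endm, OF endm0] cj
    unfolding conf_def config_at_def by auto
  have hT: "h < T" using head_lt j cj by force
  have hF: "q \<in> F \<Longrightarrow> h = 2" using halting_shape j cj by force
  have finC: "finite (coin_set \<delta> F f g K B T endm)" by (rule finite_Cs) simp_all
  interpret cf \<delta> F f g K B T endm q h tp j
    by unfold_locales (use inv hT hF j finC in auto)
  have W0': "Wr 0 = enc f g K B T (conf j) * bpow B T (int T - int j)" using W0 cj P_def by simp
  have WT': "Wr T = enc f g K B T (tm_step \<delta> F (conf j)) * bpow B T (int T - int j - 1)"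
    using WT cj P'_def C'_def by simp
  show ?thesis unfolding Cs_def K_def[symmetric] W0'[symmetric] WT'[symmetric] by (rule cf_main)
qed


end
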